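(* For every set $\mathcal X$ of $n$ entities, each moving along a trajectory of $\tau$ edges (in general position), and every $\varepsilon\ge 0$, the Reeb graph $\mathcal R=(V,E)$ has $O(\tau n^2)$ vertices and $O(\tau n^2)$ edges. These bounds are tight in the worst case: there are inputs for which $\mathcal R$ has $\Omega(\tau n^2)$ vertices and edges.
   Context: Let $\mathcal X$ be a set of $n$ entities. All trajectories are sampled at common times $t_0<t_1<\dots<t_\tau$; each entity $x$ has a position $x(t_i)\in\mathbb R^2$ at each $t_i$ and moves with constant velocity between consecutive sample times, so its trajectory is a polygonal path with $\tau$ edges defined on $[t_0,t_\tau]$. Fix $\varepsilon\ge 0$. Two entities $x,y$ are directly connected at time $t$ if their closed discs of radius $\varepsilon$ centred at $x(t)$ and $y(t)$ intersect, i.e. $\|x(t)-y(t)\|\le 2\varepsilon$. They are $\varepsilon$-connected at time $t$ if there is a sequence $x=x_0,\dots,x_k=y$ of entities with $x_i,x_{i+1}$ directly connected at $t$ for all $i$. A component at time $t$ is a maximal set of pairwise $\varepsilon$-connected entities; the components at time $t$ partition $\mathcal X$. General position: no two distinct events at which a pair of entities becomes directly connected or directly disconnected occur at the same time. The Reeb graph $\mathcal R$ is the directed graph describing the evolution of the components over $[t_0,t_\tau]$: it has a start vertex for each component at $t_0$ (in-degree 0, out-degree 1), an end vertex for each component at $t_\tau$ (in-degree 1, out-degree 0), a merge vertex (in-degree 2, out-degree 1) at each time two components unite into one, and a split vertex (in-degree 1, out-degree 2) at each time a component splits into two; each vertex $v$ has a time $t_v$, and each edge $e=(u,v)$ with $t_u<t_v$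 corresponds to a set $C_e$ of entities that is a component at every time in $[t_u,t_v]$. *)

theory Defs
  imports "HOL-Analysis.Analysis"
begin

text \<open>Entities are the indices 0..<n.  Sample times T 0 < T 1 < ... < T tau.
  P x i is the position of entity x at time T i.  Positions are in the plane real^2.\<close>

type_synonym point = "real^2"

definition seg :: "(nat \<Rightarrow> real) \<Rightarrow> real \<Rightarrow> nat" where
  "seg T t = (LEAST i. t \<le> T (Suc i))"

definition pos :: "(nat \<Rightarrow> real) \<Rightarrow> (nat \<Rightarrow> nat \<Rightarrow> point) \<Rightarrow> nat \<Rightarrow> real \<Rightarrow> point" where
  "pos T P x t = (let i = seg T t in
      P x i + ((t - T i) / (T (Suc i) - T i)) *\<^sub>R (P x (Suc i) - P x i))"

definition directly_connected ::
  "(nat \<Rightarrow> real) \<Rightarrow> (nat \<Rightarrow> nat \<Rightarrow> point) \<Rightarrow> real \<Rightarrow> nat \<Rightarrow> nat \<Rightarrow> real \<Rightarrow> bool" where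
  "directly_connected T P \<epsilon> x y t \<longleftrightarrow> dist (pos T P x t) (pos T P y t) \<le> 2 * \<epsilon>"

definition conn_rel ::
  "nat \<Rightarrow> (nat \<Rightarrow> real) \<Rightarrow> (nat \<Rightarrow> nat \<Rightarrow> point) \<Rightarrow> real \<Rightarrow> real \<Rightarrow> (nat \<times> nat) set" where
  "conn_rel n T P \<epsilon> t = {(x, y). x < n \<and> y < n \<and> directly_connected T P \<epsilon> x y t}\<^sup>*"

definition components ::
  "nat \<Rightarrow> (nat \<Rightarrow> real) \<Rightarrow> (nat \<Rightarrow> nat \<Rightarrow> point) \<Rightarrow> real \<Rightarrow> real \<Rightarrow> nat set set" where
  "components n T P \<epsilon> t = {..<n} // conn_rel n T P \<epsilon> t"

definition comp_on ::
  "nat \<Rightarrow> (nat \<Rightarrow> real) \<Rightarrow> (nat \<Rightarrow> nat \<Rightarrow> point) \<Rightarrow> real \<Rightarrow> nat set \<Rightarrow> real set \<Rightarrow> bool" where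
  "comp_on n T P \<epsilon> D I \<longleftrightarrow> (\<forall>t\<in>I. D \<in> components n T P \<epsilon> t)"

definition becomes_connected ::
  "nat \<Rightarrow> (nat \<Rightarrow> real) \<Rightarrow> (nat \<Rightarrow> nat \<Rightarrow> point) \<Rightarrow> real \<Rightarrow> nat \<Rightarrow> nat \<Rightarrow> real \<Rightarrow> bool" where
  "becomes_connected \<tau> T P \<epsilon> x y s \<longleftrightarrow>
     T 0 < s \<and> s \<le> T \<tau> \<and> directly_connected T P \<epsilon> x y s \<and>
     (\<exists>\<delta>>0. \<forall>t\<in>{s - \<delta><..<s}. \<not> directly_connected T P \<epsilon> x y t)"

definition becomes_disconnected ::
  "nat \<Rightarrow> (nat \<Rightarrow> real) \<Rightarrow> (nat \<Rightarrow> nat \<Rightarrow> point) \<Rightarrow> real \<Rightarrow> nat \<Rightarrow> nat \<Rightarrow> real \<Rightarrow> bool" where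
  "becomes_disconnected \<tau> T P \<epsilon> x y s \<longleftrightarrow>
     T 0 \<le> s \<and> s < T \<tau> \<and> directly_connected T P \<epsilon> x y s \<and>
     (\<exists>\<delta>>0. \<forall>t\<in>{s<..<s + \<delta>}. \<not> directly_connected T P \<epsilon> x y t)"

definition pair_event ::
  "nat \<Rightarrow> nat \<Rightarrow> (nat \<Rightarrow> real) \<Rightarrow> (nat \<Rightarrow> nat \<Rightarrow> point) \<Rightarrow> real \<Rightarrow> nat \<Rightarrow> nat \<Rightarrow> real \<Rightarrow> bool \<Rightarrow> bool" where
  "pair_event n \<tau> T P \<epsilon> x y s b \<longleftrightarrow> x < n \<and> y < n \<and> x \<noteq> y \<and>
     (if b then becomes_connected \<tau> T P \<epsilon> x y s else becomes_disconnected \<tau> T P \<epsilon> x y s)"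

definition general_position ::
  "nat \<Rightarrow> nat \<Rightarrow> (nat \<Rightarrow> real) \<Rightarrow> (nat \<Rightarrow> nat \<Rightarrow> point) \<Rightarrow> real \<Rightarrow> bool" where
  "general_position n \<tau> T P \<epsilon> \<longleftrightarrow>
     (\<forall>x y s b x' y' b'. pair_event n \<tau> T P \<epsilon> x y s b \<and> pair_event n \<tau> T P \<epsilon> x' y' s b'
        \<longrightarrow> {x, y} = {x', y'} \<and> b = b')"

datatype vkind = StartV | EndV | MergeV | SplitV

type_synonym vertex = "real \<times> nat set \<times> vkind"

definition parts_before ::
  "nat \<Rightarrow> (nat \<Rightarrow> real) \<Rightarrow> (nat \<Rightarrow> nat \<Rightarrow> point) \<Rightarrow> real \<Rightarrow> real \<Rightarrow> nat set \<Rightarrow> nat set set" where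
  "parts_before n T P \<epsilon> s C = {A. A \<subseteq> C \<and> (\<exists>\<delta>>0. comp_on n T P \<epsilon> A {s - \<delta><..<s})}"

definition parts_after ::
  "nat \<Rightarrow> (nat \<Rightarrow> real) \<Rightarrow> (nat \<Rightarrow> nat \<Rightarrow> point) \<Rightarrow> real \<Rightarrow> real \<Rightarrow> nat set \<Rightarrow> nat set set" where
  "parts_after n T P \<epsilon> s C = {A. A \<subseteq> C \<and> (\<exists>\<delta>>0. comp_on n T P \<epsilon> A {s<..<s + \<delta>})}"

definition is_merge ::
  "nat \<Rightarrow> nat \<Rightarrow> (nat \<Rightarrow> real) \<Rightarrow> (nat \<Rightarrow> nat \<Rightarrow> point) \<Rightarrow> real \<Rightarrow> real \<Rightarrow> nat set \<Rightarrow> bool" where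
  "is_merge n \<tau> T P \<epsilon> s C \<longleftrightarrow> T 0 < s \<and> s \<le> T \<tau> \<and> C \<in> components n T P \<epsilon> s \<and>
     (\<exists>A B. A \<noteq> B \<and> A \<union> B = C \<and>
        (\<exists>\<delta>>0. comp_on n T P \<epsilon> A {s - \<delta><..<s} \<and> comp_on n T P \<epsilon> B {s - \<delta><..<s}))"

definition is_split ::
  "nat \<Rightarrow> nat \<Rightarrow> (nat \<Rightarrow> real) \<Rightarrow> (nat \<Rightarrow> nat \<Rightarrow> point) \<Rightarrow> real \<Rightarrow> real \<Rightarrow> nat set \<Rightarrow> bool" where
  "is_split n \<tau> T P \<epsilon> s C \<longleftrightarrow> T 0 \<le> s \<and> s < T \<tau> \<and> C \<in> components n T P \<epsilon> s \<and>
     (\<exists>A B. A \<noteq> B \<and> A \<union> B = C \<and>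
        (\<exists>\<delta>>0. comp_on n T P \<epsilon> A {s<..<s + \<delta>} \<and> comp_on n T P \<epsilon> B {s<..<s + \<delta>}))"

definition reeb_vertices ::
  "nat \<Rightarrow> nat \<Rightarrow> (nat \<Rightarrow> real) \<Rightarrow> (nat \<Rightarrow> nat \<Rightarrow> point) \<Rightarrow> real \<Rightarrow> vertex set" where
  "reeb_vertices n \<tau> T P \<epsilon> =
     {(T 0, C, StartV) | C. C \<in> components n T P \<epsilon> (T 0)} \<union>
     {(T \<tau>, C, EndV) | C. C \<in> components n T P \<epsilon> (T \<tau>)} \<union>
     {(s, C, MergeV) | s C. is_merge n \<tau> T P \<epsilon> s C} \<union>
     {(s, C, SplitV) | s C. is_split n \<tau> T P \<epsilon> s C}"

fun out_sets ::
  "nat \<Rightarrow> (nat \<Rightarrow> real) \<Rightarrow> (nat \<Rightarrow> nat \<Rightarrow> point) \<Rightarrow> real \<Rightarrow> vertex \<Rightarrow> nat set set" where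
  "out_sets n T P \<epsilon> (s, C, StartV) = {C}"
| "out_sets n T P \<epsilon> (s, C, MergeV) = {C}"
| "out_sets n T P \<epsilon> (s, C, SplitV) = parts_after n T P \<epsilon> s C"
| "out_sets n T P \<epsilon> (s, C, EndV) = {}"

fun in_sets ::
  "nat \<Rightarrow> (nat \<Rightarrow> real) \<Rightarrow> (nat \<Rightarrow> nat \<Rightarrow> point) \<Rightarrow> real \<Rightarrow> vertex \<Rightarrow> nat set set" where
  "in_sets n T P \<epsilon> (s, C, StartV) = {}"
| "in_sets n T P \<epsilon> (s, C, MergeV) = parts_before n T P \<epsilon> s C"
| "in_sets n T P \<epsilon> (s, C, SplitV) = {C}"
| "in_sets n T P \<epsilon> (s, C, EndV) = {C}"

text \<open>An edge (u, D, v): D leaves u, enters v, and is a component throughout (t_u, t_v).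
  The component D is recorded so that parallel edges are counted separately.\<close>
definition reeb_edges ::
  "nat \<Rightarrow> nat \<Rightarrow> (nat \<Rightarrow> real) \<Rightarrow> (nat \<Rightarrow> nat \<Rightarrow> point) \<Rightarrow> real \<Rightarrow> (vertex \<times> nat set \<times> vertex) set" where
  "reeb_edges n \<tau> T P \<epsilon> =
     {(u, D, v). u \<in> reeb_vertices n \<tau> T P \<epsilon> \<and> v \<in> reeb_vertices n \<tau> T P \<epsilon> \<and>
        fst u < fst v \<and> D \<in> out_sets n T P \<epsilon> u \<and> D \<in> in_sets n T P \<epsilon> v \<and>
        comp_on n T P \<epsilon> D {fst u<..<fst v}}"

definition valid_input :: "nat \<Rightarrow> nat \<Rightarrow> (nat \<Rightarrow> real) \<Rightarrow> (nat \<Rightarrow> nat \<Rightarrow> point) \<Rightarrow> real \<Rightarrow> bool" where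
  "valid_input n \<tau> T P \<epsilon> \<longleftrightarrow> 1 \<le> \<tau> \<and> (\<forall>i<\<tau>. T i < T (Suc i)) \<and> 0 \<le> \<epsilon> \<and>
     general_position n \<tau> T P \<epsilon>"

end

theory Submission
  imports Defs
begin


abbreviation Rel where "Rel n T P \<epsilon> t \<equiv> {(x, y). x < n \<and> y < n \<and> directly_connected T P \<epsilon> x y t}"

lemma dc_refl: "0 \<le> \<epsilon> \<Longrightarrow> directly_connected T P \<epsilon> x x t"
  by (simp add: directly_connected_def)
lemma dc_sym: "directly_connected T P \<epsilon> x y t = directly_connected T P \<epsilon> y x t"
  by (simp add: directly_connected_def dist_commute)
lemma sym_Rel: "sym (Rel n T P \<epsilon> t)"
  using dc_sym by (auto simp: sym_def)

lemma quotient_image: "X // r = (\<lambda>x. r``{x}) ` X" by (auto simp: quotient_def)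

lemma class_eq: assumes "sym r" "(x,a) \<in> r\<^sup>*" shows "r\<^sup>*``{a} = r\<^sup>*``{x}"
proof -
  have s: "sym (r\<^sup>*)" using assms(1) by (rule sym_rtrancl)
  have "(a,x) \<in> r\<^sup>*" using s assms(2) by (auto simp: sym_def)
  then show ?thesis using assms(2) by (auto intro: rtrancl_trans)
qed

lemma comp_mem: assumes "sym r" "A \<in> X // r\<^sup>*" "a \<in> A" shows "A = r\<^sup>*``{a}"
  using assms class_eq[OF assms(1)] by (auto simp: quotient_def)

lemma comp_inter: assumes "sym r" "A \<in> X // r\<^sup>*" "B \<in> X // r\<^sup>*" "a \<in> A" "a \<in> B" shows "A = B"
  using comp_mem[OF assms(1) assms(2,4)] comp_mem[OF assms(1) assms(3,5)] by simp

lemma comp_nonempty: "A \<in> X // r\<^sup>* \<Longrightarrow> A \<noteq> {}"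
  by (auto simp: quotient_def)

lemma comp_sub_eq: assumes "sym r" "A \<in> X // r\<^sup>*" "B \<in> X // r\<^sup>*" "A \<subseteq> B" shows "A = B"
proof -
  obtain a where "a \<in> A" using comp_nonempty[OF assms(2)] by auto
  then show ?thesis using comp_inter[OF assms(1-3)] assms(4) by auto
qed

lemma components_alt: "components n T P \<epsilon> t = {..<n} // (Rel n T P \<epsilon> t)\<^sup>*"
  by (simp add: components_def conn_rel_def)

lemma T_mono: fixes T :: "nat \<Rightarrow> real" assumes "\<forall>i<\<tau>. T i < T (Suc i)" "a \<le> b" "b \<le> \<tau>" shows "T a \<le> T b"
  using assms(2,3)
proof (induction b)
  case 0 then show ?case by simp
next
  case (Suc b)
  show ?case proof (cases "a = Suc b")
    case False
    then have "a \<le> b" using Suc by simp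
    then show ?thesis using Suc assms(1) by (meson Suc_le_lessD less_imp_le order_trans Suc_leD)
  qed simp
qed

lemma T_strict: fixes T :: "nat \<Rightarrow> real" assumes "\<forall>i<\<tau>. T i < T (Suc i)" "a < b" "b \<le> \<tau>" shows "T a < T b"
proof -
  obtain b' where b: "b = Suc b'" using assms(2) by (cases b) auto
  have "T a \<le> T b'" using T_mono[OF assms(1)] assms b by simp
  also have "T b' < T b" using assms b by simp
  finally show ?thesis .
qed

lemma seg_eq: assumes inc: "\<forall>i<\<tau>. T i < T (Suc i)" and "i < \<tau>" "T i < t" "t \<le> T (Suc i)"
  shows "seg T t = i"
  unfolding seg_def
proof (rule Least_equality)
  show "t \<le> T (Suc i)" by fact
  fix j assume j: "t \<le> T (Suc j)"
  show "i \<le> j" proof (rule ccontr)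
    assume "\<not> i \<le> j"
    then have "T (Suc j) \<le> T i" using T_mono[OF inc, of "Suc j" i] assms by simp
    then show False using j assms by simp
  qed
qed

lemma seg_left: assumes inc: "\<forall>i<\<tau>. T i < T (Suc i)" and "T 0 < s" "s \<le> T \<tau>"
  shows "seg T s < \<tau> \<and> T (seg T s) < s \<and> s \<le> T (Suc (seg T s))"
proof -
  have t0: "\<tau> \<noteq> 0" using assms by (metis not_le order.trans less_le_not_le)
  then have ex: "s \<le> T (Suc (\<tau> - 1))" using assms by simp
  have a: "s \<le> T (Suc (seg T s))" unfolding seg_def by (rule LeastI[of "\<lambda>i. s \<le> T (Suc i)", OF ex])
  have b: "seg T s \<le> \<tau> - 1" unfolding seg_def by (rule Least_le[of "\<lambda>i. s \<le> T (Suc i)", OF ex])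
  have c: "T (seg T s) < s"
  proof (cases "seg T s")
    case 0 then show ?thesis using assms by simp
  next
    case (Suc j)
    then have "j < seg T s" by simp
    then have "\<not> s \<le> T (Suc j)" unfolding seg_def by (rule not_less_Least)
    then show ?thesis using Suc by simp
  qed
  show ?thesis using a b c t0 by simp
qed

definition rseg :: "(nat \<Rightarrow> real) \<Rightarrow> real \<Rightarrow> nat" where
  "rseg T s = (LEAST i. s < T (Suc i))"

lemma rseg_props: assumes inc: "\<forall>i<\<tau>. T i < T (Suc i)" and "T 0 \<le> s" "s < T \<tau>"
  shows "rseg T s < \<tau> \<and> T (rseg T s) \<le> s \<and> s < T (Suc (rseg T s))"
proof -
  have t0: "\<tau> \<noteq> 0" using assms by (metis not_le order.trans less_le_not_le)
  then have ex: "s < T (Suc (\<tau> - 1))" using assms by simp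
  have a: "s < T (Suc (rseg T s))" unfolding rseg_def by (rule LeastI[of "\<lambda>i. s < T (Suc i)", OF ex])
  have b: "rseg T s \<le> \<tau> - 1" unfolding rseg_def by (rule Least_le[of "\<lambda>i. s < T (Suc i)", OF ex])
  have c: "T (rseg T s) \<le> s"
  proof (cases "rseg T s")
    case 0 then show ?thesis using assms by simp
  next
    case (Suc j)
    then have "j < rseg T s" by simp
    then have "\<not> s < T (Suc j)" unfolding rseg_def by (rule not_less_Least)
    then show ?thesis using Suc by simp
  qed
  show ?thesis using a b c t0 by simp
qed

lemma pos_seg: assumes inc: "\<forall>i<\<tau>. T i < T (Suc i)" and "i < \<tau>" "T i \<le> t" "t \<le> T (Suc i)"
  shows "pos T P x t = P x i + ((t - T i) / (T (Suc i) - T i)) *\<^sub>R (P x (Suc i) - P x i)"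
proof (cases "T i < t")
  case True
  then show ?thesis using seg_eq[OF inc assms(2) True assms(4)] by (simp add: pos_def)
next
  case False
  then have t: "t = T i" using assms by simp
  show ?thesis
  proof (cases i)
    case 0
    have "seg T t = 0" unfolding seg_def using t 0 assms by (intro Least_equality) auto
    then show ?thesis using t 0 by (simp add: pos_def)
  next
    case (Suc j)
    have "seg T t = j" using seg_eq[OF inc, of j t] Suc assms t by simp
    moreover have "T j < T (Suc j)" using inc Suc assms(2) by simp
    then have "T (Suc j) - T j \<noteq> 0" by simp
    ultimately show ?thesis using t Suc by (simp add: pos_def)
  qed
qed



lemma affine_norm:
  fixes D0 D1 :: "'a::real_normed_vector"
  assumes "0 \<le> l" "l \<le> 1"
  shows "norm (D0 + ((1-l)*a + l*b) *\<^sub>R D1) \<le> (1-l) * norm (D0 + a *\<^sub>R D1) + l * norm (D0 + b *\<^sub>R D1)"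
proof -
  have "D0 + ((1-l)*a + l*b) *\<^sub>R D1 = (1-l) *\<^sub>R (D0 + a *\<^sub>R D1) + l *\<^sub>R (D0 + b *\<^sub>R D1)"
    by (simp add: algebra_simps)
  also have "norm \<dots> \<le> norm ((1-l) *\<^sub>R (D0 + a *\<^sub>R D1)) + norm (l *\<^sub>R (D0 + b *\<^sub>R D1))"
    by (rule norm_triangle_ineq)
  also have "\<dots> = (1-l) * norm (D0 + a *\<^sub>R D1) + l * norm (D0 + b *\<^sub>R D1)"
    using assms by simp
  finally show ?thesis .
qed

lemma dc_convex:
  assumes inc: "\<forall>i<\<tau>. T i < T (Suc i)" and i: "i < \<tau>" and "T i \<le> t1" "t1 \<le> t" "t \<le> t2" "t2 \<le> T (Suc i)"
    and d1: "directly_connected T P \<epsilon> x y t1" and d2: "directly_connected T P \<epsilon> x y t2"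
  shows "directly_connected T P \<epsilon> x y t"
proof (cases "t1 = t2")
  case True then show ?thesis using assms by simp
next
  case False
  then have lt: "t1 < t2" using assms by simp
  define d where "d = T (Suc i) - T i"
  have dpos: "d > 0" using inc i d_def by simp
  define r where "r s = (s - T i) / d" for s
  define D0 where "D0 = P x i - P y i"
  define D1 where "D1 = (P x (Suc i) - P x i) - (P y (Suc i) - P y i)"
  have D: "pos T P x s - pos T P y s = D0 + r s *\<^sub>R D1" if "T i \<le> s" "s \<le> T (Suc i)" for s
  proof -
    have "pos T P x s - pos T P y s = (P x i + r s *\<^sub>R (P x (Suc i) - P x i)) - (P y i + r s *\<^sub>R (P y (Suc i) - P y i))"
      by (simp add: pos_seg[OF inc i that] r_def d_def)
    also have "\<dots> = D0 + r s *\<^sub>R D1" by (simp add: D0_def D1_def algebra_simps)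
    finally show ?thesis .
  qed
  define l where "l = (t - t1) / (t2 - t1)"
  have l0: "0 \<le> l" and l1: "l \<le> 1" using assms lt by (auto simp: l_def field_simps)
  have lm: "l * (t2 - t1) = t - t1" using lt by (simp add: l_def)
  have e: "(1-l)*(t1 - T i) + l*(t2 - T i) = (t1 - T i) + l*(t2 - t1)" by (simp add: algebra_simps)
  have rt: "r t = (1-l) * r t1 + l * r t2"
  proof -
    have "r t = ((1-l)*(t1 - T i) + l*(t2 - T i)) / d" using e lm by (simp add: r_def)
    also have "\<dots> = (1-l) * r t1 + l * r t2" by (simp add: r_def add_divide_distrib)
    finally show ?thesis .
  qed
  have "dist (pos T P x t) (pos T P y t) = norm (D0 + r t *\<^sub>R D1)"
    using D[of t] assms by (simp add: dist_norm)
  also have "\<dots> \<le> (1-l) * norm (D0 + r t1 *\<^sub>R D1) + l * norm (D0 + r t2 *\<^sub>R D1)"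
    unfolding rt by (rule affine_norm[OF l0 l1])
  also have "\<dots> \<le> (1-l) * (2*\<epsilon>) + l * (2*\<epsilon>)"
  proof -
    have "norm (D0 + r t1 *\<^sub>R D1) \<le> 2*\<epsilon>"
      using D[of t1] assms d1 by (simp add: dist_norm directly_connected_def)
    moreover have "norm (D0 + r t2 *\<^sub>R D1) \<le> 2*\<epsilon>"
      using D[of t2] assms d2 by (simp add: dist_norm directly_connected_def)
    ultimately show ?thesis using l0 l1 by (intro add_mono mult_left_mono) auto
  qed
  also have "\<dots> = 2*\<epsilon>" by (simp add: algebra_simps)
  finally show ?thesis by (simp add: directly_connected_def)
qed

lemma left_dich:
  assumes inc: "\<forall>i<\<tau>. T i < T (Suc i)" and s: "T 0 < s" "s \<le> T \<tau>"
    and d: "directly_connected T P \<epsilon> x y s"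
  shows "(\<exists>\<delta>>0. \<forall>t\<in>{s-\<delta><..<s}. directly_connected T P \<epsilon> x y t) \<or>
         (\<exists>\<delta>>0. \<forall>t\<in>{s-\<delta><..<s}. \<not> directly_connected T P \<epsilon> x y t)"
proof -
  define i where "i = seg T s"
  have i: "i < \<tau>" "T i < s" "s \<le> T (Suc i)" using seg_left[OF inc s] i_def by auto
  show ?thesis
  proof (cases "\<exists>t. T i < t \<and> t < s \<and> directly_connected T P \<epsilon> x y t")
    case True
    then obtain t0 where t0: "T i < t0" "t0 < s" "directly_connected T P \<epsilon> x y t0" by auto
    have "\<forall>t\<in>{s-(s-t0)<..<s}. directly_connected T P \<epsilon> x y t"
      using dc_convex[OF inc i(1), of t0 _ s P \<epsilon> x y] t0 i d by auto
    then show ?thesis using t0 by (intro disjI1 exI[of _ "s - t0"]) auto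
  next
    case False
    then show ?thesis using i by (intro disjI2 exI[of _ "s - T i"]) auto
  qed
qed

lemma right_dich:
  assumes inc: "\<forall>i<\<tau>. T i < T (Suc i)" and s: "T 0 \<le> s" "s < T \<tau>"
    and d: "directly_connected T P \<epsilon> x y s"
  shows "(\<exists>\<delta>>0. \<forall>t\<in>{s<..<s+\<delta>}. directly_connected T P \<epsilon> x y t) \<or>
         (\<exists>\<delta>>0. \<forall>t\<in>{s<..<s+\<delta>}. \<not> directly_connected T P \<epsilon> x y t)"
proof -
  define i where "i = rseg T s"
  have i: "i < \<tau>" "T i \<le> s" "s < T (Suc i)" using rseg_props[OF inc s] i_def by auto
  show ?thesis
  proof (cases "\<exists>t. s < t \<and> t < T (Suc i) \<and> directly_connected T P \<epsilon> x y t")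
    case True
    then obtain t0 where t0: "s < t0" "t0 < T (Suc i)" "directly_connected T P \<epsilon> x y t0" by auto
    have "\<forall>t\<in>{s<..<s+(t0-s)}. directly_connected T P \<epsilon> x y t"
      using dc_convex[OF inc i(1), of s _ t0 P \<epsilon> x y] t0 i d by auto
    then show ?thesis using t0 by (intro disjI1 exI[of _ "t0 - s"]) auto
  next
    case False
    then show ?thesis using i by (intro disjI2 exI[of _ "T (Suc i) - s"]) auto
  qed
qed

lemma bc_count:
  assumes inc: "\<forall>i<\<tau>. T i < T (Suc i)"
  shows "finite {s. becomes_connected \<tau> T P \<epsilon> x y s} \<and> card {s. becomes_connected \<tau> T P \<epsilon> x y s} \<le> \<tau>"
proof -
  let ?S = "{s. becomes_connected \<tau> T P \<epsilon> x y s}"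
  have inj: "inj_on (seg T) ?S"
  proof (rule inj_onI)
    fix s1 s2 assume s1: "s1 \<in> ?S" and s2: "s2 \<in> ?S" and eq: "seg T s1 = seg T s2"
    show "s1 = s2"
    proof (rule ccontr)
      assume ne: "s1 \<noteq> s2"
      have key: False if a: "a \<in> ?S" "b \<in> ?S" "seg T a = seg T b" "a < b" for a b
      proof -
        define i where "i = seg T a"
        have ia: "i < \<tau>" "T i < a" "a \<le> T (Suc i)" using seg_left[OF inc, of a] a i_def
          by (auto simp: becomes_connected_def)
        have ib: "T i < b" "b \<le> T (Suc i)" using seg_left[OF inc, of b] a i_def
          by (auto simp: becomes_connected_def)
        obtain \<delta> where \<delta>: "\<delta> > 0" "\<forall>t\<in>{b - \<delta><..<b}. \<not> directly_connected T P \<epsilon> x y t"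
          using a(2) by (auto simp: becomes_connected_def)
        define t where "t = max a (b - \<delta>/2)"
        have "directly_connected T P \<epsilon> x y t"
          using dc_convex[OF inc ia(1), of a t b P \<epsilon> x y] ia ib a \<delta>
          by (auto simp: t_def becomes_connected_def)
        moreover have "t \<in> {b - \<delta><..<b}" using \<delta> a by (auto simp: t_def)
        ultimately show False using \<delta> by auto
      qed
      show False using ne key[OF s1 s2 eq] key[OF s2 s1 eq[symmetric]] by linarith
    qed
  qed
  have sub: "seg T ` ?S \<subseteq> {..<\<tau>}" using seg_left[OF inc] by (auto simp: becomes_connected_def)
  have fin: "finite ?S" using inj sub finite_subset by (metis finite_imageD finite_lessThan)
  have "card ?S = card (seg T ` ?S)" using inj by (simp add: card_image)
  also have "\<dots> \<le> \<tau>" using card_mono[OF _ sub] by simp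
  finally show ?thesis using fin by simp
qed

lemma bd_count:
  assumes inc: "\<forall>i<\<tau>. T i < T (Suc i)"
  shows "finite {s. becomes_disconnected \<tau> T P \<epsilon> x y s} \<and> card {s. becomes_disconnected \<tau> T P \<epsilon> x y s} \<le> \<tau>"
proof -
  let ?S = "{s. becomes_disconnected \<tau> T P \<epsilon> x y s}"
  have inj: "inj_on (rseg T) ?S"
  proof (rule inj_onI)
    fix s1 s2 assume s1: "s1 \<in> ?S" and s2: "s2 \<in> ?S" and eq: "rseg T s1 = rseg T s2"
    show "s1 = s2"
    proof (rule ccontr)
      assume ne: "s1 \<noteq> s2"
      have key: False if a: "a \<in> ?S" "b \<in> ?S" "rseg T a = rseg T b" "a < b" for a b
      proof -
        define i where "i = rseg T a"
        have ia: "i < \<tau>" "T i \<le> a" "a < T (Suc i)" using rseg_props[OF inc, of a] a i_def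
          by (auto simp: becomes_disconnected_def)
        have ib: "T i \<le> b" "b < T (Suc i)" using rseg_props[OF inc, of b] a i_def
          by (auto simp: becomes_disconnected_def)
        obtain \<delta> where \<delta>: "\<delta> > 0" "\<forall>t\<in>{a<..<a+\<delta>}. \<not> directly_connected T P \<epsilon> x y t"
          using a(1) by (auto simp: becomes_disconnected_def)
        define t where "t = min b (a + \<delta>/2)"
        have "directly_connected T P \<epsilon> x y t"
          using dc_convex[OF inc ia(1), of a t b P \<epsilon> x y] ia ib a \<delta>
          by (auto simp: t_def becomes_disconnected_def)
        moreover have "t \<in> {a<..<a+\<delta>}" using \<delta> a by (auto simp: t_def)
        ultimately show False using \<delta> by auto
      qed
      show False using ne key[OF s1 s2 eq] key[OF s2 s1 eq[symmetric]] by linarith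
    qed
  qed
  have sub: "rseg T ` ?S \<subseteq> {..<\<tau>}" using rseg_props[OF inc] by (auto simp: becomes_disconnected_def)
  have fin: "finite ?S" using inj sub finite_subset by (metis finite_imageD finite_lessThan)
  have "card ?S = card (rseg T ` ?S)" using inj by (simp add: card_image)
  also have "\<dots> \<le> \<tau>" using card_mono[OF _ sub] by simp
  finally show ?thesis using fin by simp
qed



lemma path_transfer:
  assumes "(a,y) \<in> r\<^sup>*" "\<And>z w. (z,w) \<in> r \<Longrightarrow> (a,z) \<in> r\<^sup>* \<Longrightarrow> (z,w) \<in> r'"
  shows "(a,y) \<in> r'\<^sup>*"
  using assms(1)
proof (induction rule: rtrancl_induct)
  case base then show ?case by simp
next
  case (step z w)
  then show ?case using assms(2)[of z w] by (meson rtrancl.rtrancl_into_rtrancl)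
qed

lemma comp_grow:
  assumes "sym r" "sym r'" "C \<in> X // r\<^sup>*" "A \<in> X // r'\<^sup>*" "A \<subseteq> C"
    and H: "\<And>z w. (z,w) \<in> r \<Longrightarrow> z \<in> C \<Longrightarrow> (z,w) \<in> r'"
  shows "A = C"
proof -
  obtain a where a: "a \<in> A" using comp_nonempty[OF assms(4)] by auto
  have C: "C = r\<^sup>*``{a}" using comp_mem[OF assms(1,3)] a assms(5) by auto
  have A: "A = r'\<^sup>*``{a}" using comp_mem[OF assms(2,4) a] .
  have "C \<subseteq> A"
  proof
    fix y assume "y \<in> C"
    then have "(a,y) \<in> r\<^sup>*" using C by auto
    then have "(a,y) \<in> r'\<^sup>*" by (rule path_transfer) (use H C in auto)
    then show "y \<in> A" using A by auto
  qed
  then show ?thesis using assms(5) by auto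
qed

lemma ev_left: "\<delta> > 0 \<Longrightarrow> \<forall>t\<in>{s-\<delta><..<s}. Q t \<Longrightarrow> eventually Q (at_left (s::real))"
  using eventually_at_left_real[of "s-\<delta>" s] by (auto elim: eventually_mono)

lemma ev_right: "\<delta> > 0 \<Longrightarrow> \<forall>t\<in>{s<..<s+\<delta>}. Q t \<Longrightarrow> eventually Q (at_right (s::real))"
  using eventually_at_right_real[of s "s+\<delta>"] by (auto elim: eventually_mono)

lemma ev_left_ex: "eventually Q (at_left (s::real)) \<Longrightarrow> \<exists>t. Q t"
  using eventually_happens[of Q "at_left s"] by auto

lemma ev_right_ex: "eventually Q (at_right (s::real)) \<Longrightarrow> \<exists>t. Q t"
  using eventually_happens[of Q "at_right s"] by auto

lemma finite_Rel: "finite (Rel n T P \<epsilon> t)"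
  by (rule finite_subset[of _ "{..<n} \<times> {..<n}"]) auto

lemma merge_event:
  assumes inc: "\<forall>i<\<tau>. T i < T (Suc i)" and eps: "0 \<le> \<epsilon>" and m: "is_merge n \<tau> T P \<epsilon> s C"
  shows "\<exists>x y. x<n \<and> y<n \<and> x\<noteq>y \<and> x \<in> C \<and> becomes_connected \<tau> T P \<epsilon> x y s"
proof (rule ccontr)
  assume H: "\<not> ?thesis"
  from m obtain A B \<delta> where s: "T 0 < s" "s \<le> T \<tau>" and C: "C \<in> components n T P \<epsilon> s"
    and AB: "A \<noteq> B" "A \<union> B = C" "\<delta> > 0" "comp_on n T P \<epsilon> A {s - \<delta><..<s}" "comp_on n T P \<epsilon> B {s - \<delta><..<s}"
    unfolding is_merge_def by blast
  let ?Q = "{p \<in> Rel n T P \<epsilon> s. fst p \<in> C}"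
  have "finite ?Q" using finite_Rel by (rule finite_subset[rotated]) auto
  moreover have "\<forall>p\<in>?Q. eventually (\<lambda>t. p \<in> Rel n T P \<epsilon> t) (at_left s)"
  proof
    fix p assume p: "p \<in> ?Q"
    obtain x y where xy: "p = (x,y)" by (cases p)
    have x: "x < n" "y < n" "directly_connected T P \<epsilon> x y s" "x \<in> C" using p xy by auto
    show "eventually (\<lambda>t. p \<in> Rel n T P \<epsilon> t) (at_left s)"
    proof (cases "x = y")
      case True then show ?thesis using xy x dc_refl[OF eps] by simp
    next
      case False
      have "\<not> becomes_connected \<tau> T P \<epsilon> x y s" using H x False by blast
      then have "\<exists>\<delta>>0. \<forall>t\<in>{s-\<delta><..<s}. directly_connected T P \<epsilon> x y t"
        using left_dich[OF inc s x(3)] s x by (auto simp: becomes_connected_def)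
      then show ?thesis using xy x by (auto intro: ev_left)
    qed
  qed
  ultimately have e1: "eventually (\<lambda>t. \<forall>p\<in>?Q. p \<in> Rel n T P \<epsilon> t) (at_left s)"
    by (rule eventually_ball_finite)
  have e2: "eventually (\<lambda>t. A \<in> components n T P \<epsilon> t \<and> B \<in> components n T P \<epsilon> t) (at_left s)"
    using AB by (intro ev_left[of \<delta>]) (auto simp: comp_on_def)
  obtain t where t: "\<forall>p\<in>?Q. p \<in> Rel n T P \<epsilon> t" "A \<in> components n T P \<epsilon> t" "B \<in> components n T P \<epsilon> t"
    using ev_left_ex[OF eventually_conj[OF e1 e2]] by auto
  have "A = C"
    by (rule comp_grow[OF sym_Rel sym_Rel C[unfolded components_alt] t(2)[unfolded components_alt]])
       (use t AB in auto)
  moreover have "B = C"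
    by (rule comp_grow[OF sym_Rel sym_Rel C[unfolded components_alt] t(3)[unfolded components_alt]])
       (use t AB in auto)
  ultimately show False using AB by simp
qed

lemma split_event:
  assumes inc: "\<forall>i<\<tau>. T i < T (Suc i)" and eps: "0 \<le> \<epsilon>" and m: "is_split n \<tau> T P \<epsilon> s C"
  shows "\<exists>x y. x<n \<and> y<n \<and> x\<noteq>y \<and> x \<in> C \<and> becomes_disconnected \<tau> T P \<epsilon> x y s"
proof (rule ccontr)
  assume H: "\<not> ?thesis"
  from m obtain A B \<delta> where s: "T 0 \<le> s" "s < T \<tau>" and C: "C \<in> components n T P \<epsilon> s"
    and AB: "A \<noteq> B" "A \<union> B = C" "\<delta> > 0" "comp_on n T P \<epsilon> A {s<..<s+\<delta>}" "comp_on n T P \<epsilon> B {s<..<s+\<delta>}"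
    unfolding is_split_def by blast
  let ?Q = "{p \<in> Rel n T P \<epsilon> s. fst p \<in> C}"
  have "finite ?Q" using finite_Rel by (rule finite_subset[rotated]) auto
  moreover have "\<forall>p\<in>?Q. eventually (\<lambda>t. p \<in> Rel n T P \<epsilon> t) (at_right s)"
  proof
    fix p assume p: "p \<in> ?Q"
    obtain x y where xy: "p = (x,y)" by (cases p)
    have x: "x < n" "y < n" "directly_connected T P \<epsilon> x y s" "x \<in> C" using p xy by auto
    show "eventually (\<lambda>t. p \<in> Rel n T P \<epsilon> t) (at_right s)"
    proof (cases "x = y")
      case True then show ?thesis using xy x dc_refl[OF eps] by simp
    next
      case False
      have "\<not> becomes_disconnected \<tau> T P \<epsilon> x y s" using H x False by blast
      then have "\<exists>\<delta>>0. \<forall>t\<in>{s<..<s+\<delta>}. directly_connected T P \<epsilon> x y t"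
        using right_dich[OF inc s x(3)] s x by (auto simp: becomes_disconnected_def)
      then show ?thesis using xy x by (auto intro: ev_right)
    qed
  qed
  ultimately have e1: "eventually (\<lambda>t. \<forall>p\<in>?Q. p \<in> Rel n T P \<epsilon> t) (at_right s)"
    by (rule eventually_ball_finite)
  have e2: "eventually (\<lambda>t. A \<in> components n T P \<epsilon> t \<and> B \<in> components n T P \<epsilon> t) (at_right s)"
    using AB by (intro ev_right[of \<delta>]) (auto simp: comp_on_def)
  obtain t where t: "\<forall>p\<in>?Q. p \<in> Rel n T P \<epsilon> t" "A \<in> components n T P \<epsilon> t" "B \<in> components n T P \<epsilon> t"
    using ev_right_ex[OF eventually_conj[OF e1 e2]] by auto
  have "A = C"
    by (rule comp_grow[OF sym_Rel sym_Rel C[unfolded components_alt] t(2)[unfolded components_alt]])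
       (use t AB in auto)
  moreover have "B = C"
    by (rule comp_grow[OF sym_Rel sym_Rel C[unfolded components_alt] t(3)[unfolded components_alt]])
       (use t AB in auto)
  ultimately show False using AB by simp
qed

lemma comp_sub: assumes "A \<in> components n T P \<epsilon> s" shows "A \<subseteq> {..<n}"
proof
  fix y assume y: "y \<in> A"
  obtain x where x: "x < n" "A = (Rel n T P \<epsilon> s)\<^sup>*``{x}" using assms
    by (auto simp: components_alt quotient_def)
  have "(x,y) \<in> (Rel n T P \<epsilon> s)\<^sup>*" using x y by auto
  then show "y \<in> {..<n}"
    by (induction rule: rtrancl_induct) (use x in auto)
qed

lemma dc_in_comp:
  assumes "C \<in> components n T P \<epsilon> s" "x \<in> C" "y < n" "directly_connected T P \<epsilon> x y s"
  shows "y \<in> C"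
proof -
  have "x < n" using comp_sub[OF assms(1)] assms(2) by auto
  then show ?thesis
  using comp_mem[OF sym_Rel assms(1)[unfolded components_alt] assms(2)] assms by auto
qed



lemma vi_inc: "valid_input n \<tau> T P \<epsilon> \<Longrightarrow> \<forall>i<\<tau>. T i < T (Suc i)" by (simp add: valid_input_def)
lemma vi_eps: "valid_input n \<tau> T P \<epsilon> \<Longrightarrow> 0 \<le> \<epsilon>" by (simp add: valid_input_def)
lemma vi_gp: "valid_input n \<tau> T P \<epsilon> \<Longrightarrow> general_position n \<tau> T P \<epsilon>" by (simp add: valid_input_def)

lemma gp_use: "general_position n \<tau> T P \<epsilon> \<Longrightarrow> pair_event n \<tau> T P \<epsilon> x y s b \<Longrightarrow> pair_event n \<tau> T P \<epsilon> x' y' s b'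
   \<Longrightarrow> {x, y} = {x', y'} \<and> b = b'"
  unfolding general_position_def by blast

lemma merge_unique:
  assumes v: "valid_input n \<tau> T P \<epsilon>" and m1: "is_merge n \<tau> T P \<epsilon> s C1" and m2: "is_merge n \<tau> T P \<epsilon> s C2"
  shows "C1 = C2"
proof -
  obtain x1 y1 where e1: "x1<n" "y1<n" "x1\<noteq>y1" "x1 \<in> C1" "becomes_connected \<tau> T P \<epsilon> x1 y1 s"
    using merge_event[OF vi_inc[OF v] vi_eps[OF v] m1] by blast
  obtain x2 y2 where e2: "x2<n" "y2<n" "x2\<noteq>y2" "x2 \<in> C2" "becomes_connected \<tau> T P \<epsilon> x2 y2 s"
    using merge_event[OF vi_inc[OF v] vi_eps[OF v] m2] by blast
  have "{x1,y1} = {x2,y2}" using gp_use[OF vi_gp[OF v], of x1 y1 s True x2 y2 True] e1 e2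
    by (simp add: pair_event_def)
  moreover have C2: "C2 \<in> components n T P \<epsilon> s" using m2 by (simp add: is_merge_def)
  moreover have "y2 \<in> C2" using dc_in_comp[OF C2 e2(4) e2(2)] e2(5) by (simp add: becomes_connected_def)
  ultimately have "x1 \<in> C2" using e2 by auto
  moreover have C1: "C1 \<in> components n T P \<epsilon> s" using m1 by (simp add: is_merge_def)
  ultimately show ?thesis using comp_inter[OF sym_Rel C1[unfolded components_alt] C2[unfolded components_alt] e1(4)] by simp
qed

lemma split_unique:
  assumes v: "valid_input n \<tau> T P \<epsilon>" and m1: "is_split n \<tau> T P \<epsilon> s C1" and m2: "is_split n \<tau> T P \<epsilon> s C2"
  shows "C1 = C2"
proof -
  obtain x1 y1 where e1: "x1<n" "y1<n" "x1\<noteq>y1" "x1 \<in> C1" "becomes_disconnected \<tau> T P \<epsilon> x1 y1 s"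
    using split_event[OF vi_inc[OF v] vi_eps[OF v] m1] by blast
  obtain x2 y2 where e2: "x2<n" "y2<n" "x2\<noteq>y2" "x2 \<in> C2" "becomes_disconnected \<tau> T P \<epsilon> x2 y2 s"
    using split_event[OF vi_inc[OF v] vi_eps[OF v] m2] by blast
  have "{x1,y1} = {x2,y2}" using gp_use[OF vi_gp[OF v], of x1 y1 s False x2 y2 False] e1 e2
    by (simp add: pair_event_def)
  moreover have C2: "C2 \<in> components n T P \<epsilon> s" using m2 by (simp add: is_split_def)
  moreover have "y2 \<in> C2" using dc_in_comp[OF C2 e2(4) e2(2)] e2(5) by (simp add: becomes_disconnected_def)
  ultimately have "x1 \<in> C2" using e2 by auto
  moreover have C1: "C1 \<in> components n T P \<epsilon> s" using m1 by (simp add: is_split_def)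
  ultimately show ?thesis using comp_inter[OF sym_Rel C1[unfolded components_alt] C2[unfolded components_alt] e1(4)] by simp
qed

lemma merge_not_before:
  assumes m: "is_merge n \<tau> T P \<epsilon> s C" and d: "\<delta> > 0" "comp_on n T P \<epsilon> C {s-\<delta><..<s}"
  shows False
proof -
  from m obtain A B \<delta>' where AB: "A \<noteq> B" "A \<union> B = C" "\<delta>' > 0" "comp_on n T P \<epsilon> A {s - \<delta>'<..<s}" "comp_on n T P \<epsilon> B {s - \<delta>'<..<s}"
    unfolding is_merge_def by blast
  have e1: "eventually (\<lambda>t. A \<in> components n T P \<epsilon> t \<and> B \<in> components n T P \<epsilon> t) (at_left s)"
    using AB by (intro ev_left[of \<delta>']) (auto simp: comp_on_def)
  have e2: "eventually (\<lambda>t. C \<in> components n T P \<epsilon> t) (at_left s)"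
    using d by (intro ev_left[of \<delta>]) (auto simp: comp_on_def)
  obtain t where t: "A \<in> components n T P \<epsilon> t" "B \<in> components n T P \<epsilon> t" "C \<in> components n T P \<epsilon> t"
    using ev_left_ex[OF eventually_conj[OF e1 e2]] by auto
  have "A = C" using comp_sub_eq[OF sym_Rel t(1)[unfolded components_alt] t(3)[unfolded components_alt]] AB by auto
  moreover have "B = C" using comp_sub_eq[OF sym_Rel t(2)[unfolded components_alt] t(3)[unfolded components_alt]] AB by auto
  ultimately show False using AB by simp
qed

lemma split_not_after:
  assumes m: "is_split n \<tau> T P \<epsilon> s C" and d: "\<delta> > 0" "comp_on n T P \<epsilon> C {s<..<s+\<delta>}"
  shows False
proof -
  from m obtain A B \<delta>' where AB: "A \<noteq> B" "A \<union> B = C" "\<delta>' > 0" "comp_on n T P \<epsilon> A {s<..<s+\<delta>'}" "comp_on n T P \<epsilon> B {s<..<s+\<delta>'}"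
    unfolding is_split_def by blast
  have e1: "eventually (\<lambda>t. A \<in> components n T P \<epsilon> t \<and> B \<in> components n T P \<epsilon> t) (at_right s)"
    using AB by (intro ev_right[of \<delta>']) (auto simp: comp_on_def)
  have e2: "eventually (\<lambda>t. C \<in> components n T P \<epsilon> t) (at_right s)"
    using d by (intro ev_right[of \<delta>]) (auto simp: comp_on_def)
  obtain t where t: "A \<in> components n T P \<epsilon> t" "B \<in> components n T P \<epsilon> t" "C \<in> components n T P \<epsilon> t"
    using ev_right_ex[OF eventually_conj[OF e1 e2]] by auto
  have "A = C" using comp_sub_eq[OF sym_Rel t(1)[unfolded components_alt] t(3)[unfolded components_alt]] AB by auto
  moreover have "B = C" using comp_sub_eq[OF sym_Rel t(2)[unfolded components_alt] t(3)[unfolded components_alt]] AB by auto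
  ultimately show False using AB by simp
qed

lemma parts_after_card:
  assumes v: "valid_input n \<tau> T P \<epsilon>" and sp: "is_split n \<tau> T P \<epsilon> s C"
  shows "finite (parts_after n T P \<epsilon> s C) \<and> card (parts_after n T P \<epsilon> s C) \<le> 2"
proof -
  note inc = vi_inc[OF v] and eps = vi_eps[OF v]
  obtain a b where ab: "a<n" "b<n" "a\<noteq>b" "a \<in> C" "becomes_disconnected \<tau> T P \<epsilon> a b s"
    using split_event[OF inc eps sp] by blast
  have s: "T 0 \<le> s" "s < T \<tau>" and C: "C \<in> components n T P \<epsilon> s" using sp by (auto simp: is_split_def)
  let ?r = "Rel n T P \<epsilon> s"
  let ?r' = "{p \<in> ?r. {fst p, snd p} \<noteq> {a, b}}"
  have Ca: "C = ?r\<^sup>*``{a}" using comp_mem[OF sym_Rel C[unfolded components_alt] ab(4)] .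
  have cl1: "(a,z) \<in> ?r'\<^sup>* \<or> (b,z) \<in> ?r'\<^sup>*" if "z \<in> C" for z
  proof -
    have "(a,z) \<in> ?r\<^sup>*" using that Ca by auto
    then show ?thesis
    proof (induction rule: rtrancl_induct)
      case base then show ?case by simp
    next
      case (step z w)
      show ?case
      proof (cases "{z,w} = {a,b}")
        case True
        then have "w = a \<or> w = b" by auto
        then show ?thesis by auto
      next
        case False
        then have "(z,w) \<in> ?r'" using step by auto
        then show ?thesis using step.IH by (meson rtrancl.rtrancl_into_rtrancl)
      qed
    qed
  qed
  have fr': "finite ?r'" using finite_Rel by (rule finite_subset[rotated]) auto
  have "\<forall>p\<in>?r'. eventually (\<lambda>t. p \<in> Rel n T P \<epsilon> t) (at_right s)"
  proof
    fix p assume p: "p \<in> ?r'"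
    obtain x y where xy: "p = (x,y)" by (cases p)
    have x: "x < n" "y < n" "directly_connected T P \<epsilon> x y s" "{x,y} \<noteq> {a,b}" using p xy by auto
    show "eventually (\<lambda>t. p \<in> Rel n T P \<epsilon> t) (at_right s)"
    proof (cases "x = y")
      case True then show ?thesis using xy x dc_refl[OF eps] by simp
    next
      case False
      have "\<not> becomes_disconnected \<tau> T P \<epsilon> x y s"
      proof
        assume "becomes_disconnected \<tau> T P \<epsilon> x y s"
        then have "{x,y} = {a,b}" using gp_use[OF vi_gp[OF v], of x y s False a b False] ab x False
          by (simp add: pair_event_def)
        then show False using x by simp
      qed
      then have "\<exists>\<delta>>0. \<forall>t\<in>{s<..<s+\<delta>}. directly_connected T P \<epsilon> x y t"
        using right_dich[OF inc s x(3)] s x by (auto simp: becomes_disconnected_def)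
      then show ?thesis using xy x by (auto intro: ev_right)
    qed
  qed
  then have e1: "eventually (\<lambda>t. \<forall>p\<in>?r'. p \<in> Rel n T P \<epsilon> t) (at_right s)"
    by (rule eventually_ball_finite[OF fr'])
  have cl3: "a \<in> A \<or> b \<in> A" if A: "A \<in> parts_after n T P \<epsilon> s C" for A
  proof -
    obtain \<delta> where d: "A \<subseteq> C" "\<delta> > 0" "comp_on n T P \<epsilon> A {s<..<s+\<delta>}"
      using A by (auto simp: parts_after_def)
    have e2: "eventually (\<lambda>t. A \<in> components n T P \<epsilon> t) (at_right s)"
      using d by (intro ev_right[of \<delta>]) (auto simp: comp_on_def)
    obtain t where t: "\<forall>p\<in>?r'. p \<in> Rel n T P \<epsilon> t" "A \<in> components n T P \<epsilon> t"
      using ev_right_ex[OF eventually_conj[OF e1 e2]] by auto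
    obtain z where z: "z \<in> A" using comp_nonempty[OF t(2)[unfolded components_alt]] by auto
    have At: "A = (Rel n T P \<epsilon> t)\<^sup>*``{z}" using comp_mem[OF sym_Rel t(2)[unfolded components_alt] z] .
    have r'sub: "?r' \<subseteq> Rel n T P \<epsilon> t"
    proof
      fix p assume "p \<in> ?r'" then show "p \<in> Rel n T P \<epsilon> t" using t(1) by blast
    qed
    have sub: "?r'\<^sup>* \<subseteq> (Rel n T P \<epsilon> t)\<^sup>*" by (rule rtrancl_mono[OF r'sub])
    have symt: "sym ((Rel n T P \<epsilon> t)\<^sup>*)" using sym_Rel by (rule sym_rtrancl)
    have "z \<in> C" using z d by auto
    then have "(a,z) \<in> (Rel n T P \<epsilon> t)\<^sup>* \<or> (b,z) \<in> (Rel n T P \<epsilon> t)\<^sup>*" using cl1 sub by blast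
    then have "(z,a) \<in> (Rel n T P \<epsilon> t)\<^sup>* \<or> (z,b) \<in> (Rel n T P \<epsilon> t)\<^sup>*" using symt by (auto simp: sym_def)
    then show ?thesis using At by auto
  qed
  have cl4: "A1 = A2" if h: "A1 \<in> parts_after n T P \<epsilon> s C" "A2 \<in> parts_after n T P \<epsilon> s C" "w \<in> A1" "w \<in> A2" for A1 A2 w
  proof -
    obtain \<delta>1 where d1: "\<delta>1 > 0" "comp_on n T P \<epsilon> A1 {s<..<s+\<delta>1}" using h(1) unfolding parts_after_def by blast
    obtain \<delta>2 where d2: "\<delta>2 > 0" "comp_on n T P \<epsilon> A2 {s<..<s+\<delta>2}" using h(2) unfolding parts_after_def by blast
    have e1: "eventually (\<lambda>t. A1 \<in> components n T P \<epsilon> t) (at_right s)"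
      using d1 by (intro ev_right[of \<delta>1]) (auto simp: comp_on_def)
    have e2: "eventually (\<lambda>t. A2 \<in> components n T P \<epsilon> t) (at_right s)"
      using d2 by (intro ev_right[of \<delta>2]) (auto simp: comp_on_def)
    obtain t where tt: "A1 \<in> components n T P \<epsilon> t" "A2 \<in> components n T P \<epsilon> t"
      using ev_right_ex[OF eventually_conj[OF e1 e2]] by auto
    show ?thesis using comp_inter[OF sym_Rel tt(1)[unfolded components_alt] tt(2)[unfolded components_alt] h(3,4)] .
  qed
  let ?f = "\<lambda>A. if a \<in> A then a else b"
  have inj: "inj_on ?f (parts_after n T P \<epsilon> s C)"
  proof (rule inj_onI)
    fix A1 A2 assume A: "A1 \<in> parts_after n T P \<epsilon> s C" "A2 \<in> parts_after n T P \<epsilon> s C" "?f A1 = ?f A2"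
    show "A1 = A2"
    proof (cases "a \<in> A1")
      case True
      then have "a \<in> A2" using A(3) ab(3) by (metis (full_types))
      then show ?thesis using cl4[OF A(1,2)] True by blast
    next
      case False
      then have "b \<in> A1" using cl3[OF A(1)] by blast
      have "a \<notin> A2" using A(3) False ab(3) by (metis (full_types))
      then have "b \<in> A2" using cl3[OF A(2)] by blast
      then show ?thesis using cl4[OF A(1,2)] \<open>b \<in> A1\<close> by blast
    qed
  qed
  have sub: "?f ` (parts_after n T P \<epsilon> s C) \<subseteq> {a, b}" by auto
  have fin: "finite (parts_after n T P \<epsilon> s C)"
    by (rule finite_imageD[OF finite_subset[OF sub] inj]) simp
  have "card (parts_after n T P \<epsilon> s C) = card (?f ` (parts_after n T P \<epsilon> s C))" using card_image[OF inj] by simp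
  also have "\<dots> \<le> card {a,b}" by (rule card_mono[OF _ sub]) simp
  also have "\<dots> \<le> 2" by (simp add: card_insert_if)
  finally show ?thesis using fin by simp
qed



lemma card_components: "finite (components n T P \<epsilon> t) \<and> card (components n T P \<epsilon> t) \<le> n"
proof -
  have e: "components n T P \<epsilon> t = (\<lambda>x. (Rel n T P \<epsilon> t)\<^sup>*``{x}) ` {..<n}"
    by (simp add: components_alt quotient_image)
  show ?thesis unfolding e using card_image_le[of "{..<n}"] by simp
qed

lemma inj_card_bound: "inj_on f A \<Longrightarrow> f ` A \<subseteq> B \<Longrightarrow> finite B \<Longrightarrow> finite A \<and> card A \<le> card B"
  by (meson card_inj_on_le finite_imageD finite_subset)

lemma merges_card:
  assumes v: "valid_input n \<tau> T P \<epsilon>"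
  shows "finite {(s, C, MergeV) | s C. is_merge n \<tau> T P \<epsilon> s C} \<and>
         card {(s, C, MergeV) | s C. is_merge n \<tau> T P \<epsilon> s C} \<le> n * n * \<tau>"
proof -
  let ?M = "{(s, C, MergeV) | s C. is_merge n \<tau> T P \<epsilon> s C}"
  let ?I = "{..<n} \<times> {..<n}"
  let ?U = "\<Union>p\<in>?I. {s. becomes_connected \<tau> T P \<epsilon> (fst p) (snd p) s}"
  have inj: "inj_on fst ?M"
  proof (rule inj_onI)
    fix p q assume p: "p \<in> ?M" and q: "q \<in> ?M" and e: "fst p = fst q"
    obtain s1 C1 where p': "p = (s1, C1, MergeV)" "is_merge n \<tau> T P \<epsilon> s1 C1" using p by blast
    obtain s2 C2 where q': "q = (s2, C2, MergeV)" "is_merge n \<tau> T P \<epsilon> s2 C2" using q by blast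
    have "s1 = s2" using e p' q' by simp
    then have "C1 = C2" using merge_unique[OF v] p' q' by blast
    then show "p = q" using p' q' \<open>s1 = s2\<close> by simp
  qed
  have sub: "fst ` ?M \<subseteq> ?U"
  proof
    fix s assume "s \<in> fst ` ?M"
    then obtain C where "is_merge n \<tau> T P \<epsilon> s C" by auto
    then obtain x y where "x<n" "y<n" "becomes_connected \<tau> T P \<epsilon> x y s"
      using merge_event[OF vi_inc[OF v] vi_eps[OF v]] by blast
    then show "s \<in> ?U" by force
  qed
  have finU: "finite ?U" using bc_count[OF vi_inc[OF v]] by auto
  have "card ?U \<le> (\<Sum>p\<in>?I. card {s. becomes_connected \<tau> T P \<epsilon> (fst p) (snd p) s})"
    by (rule card_UN_le) simp
  also have "\<dots> \<le> card ?I * \<tau>"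
  proof -
    have H: "\<And>p. p \<in> ?I \<Longrightarrow> card {s. becomes_connected \<tau> T P \<epsilon> (fst p) (snd p) s} \<le> \<tau>"
      using bc_count[OF vi_inc[OF v]] by blast
    have "(\<Sum>p\<in>?I. card {s. becomes_connected \<tau> T P \<epsilon> (fst p) (snd p) s}) \<le> of_nat (card ?I) * \<tau>"
      by (rule sum_bounded_above[OF H])
    then show ?thesis by simp
  qed
  also have "\<dots> = n * n * \<tau>" by simp
  finally show ?thesis using inj_card_bound[OF inj sub finU] by simp
qed

lemma splits_card:
  assumes v: "valid_input n \<tau> T P \<epsilon>"
  shows "finite {(s, C, SplitV) | s C. is_split n \<tau> T P \<epsilon> s C} \<and>
         card {(s, C, SplitV) | s C. is_split n \<tau> T P \<epsilon> s C} \<le> n * n * \<tau>"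
proof -
  let ?M = "{(s, C, SplitV) | s C. is_split n \<tau> T P \<epsilon> s C}"
  let ?I = "{..<n} \<times> {..<n}"
  let ?U = "\<Union>p\<in>?I. {s. becomes_disconnected \<tau> T P \<epsilon> (fst p) (snd p) s}"
  have inj: "inj_on fst ?M"
  proof (rule inj_onI)
    fix p q assume p: "p \<in> ?M" and q: "q \<in> ?M" and e: "fst p = fst q"
    obtain s1 C1 where p': "p = (s1, C1, SplitV)" "is_split n \<tau> T P \<epsilon> s1 C1" using p by blast
    obtain s2 C2 where q': "q = (s2, C2, SplitV)" "is_split n \<tau> T P \<epsilon> s2 C2" using q by blast
    have "s1 = s2" using e p' q' by simp
    then have "C1 = C2" using split_unique[OF v] p' q' by blast
    then show "p = q" using p' q' \<open>s1 = s2\<close> by simp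
  qed
  have sub: "fst ` ?M \<subseteq> ?U"
  proof
    fix s assume "s \<in> fst ` ?M"
    then obtain C where "is_split n \<tau> T P \<epsilon> s C" by auto
    then obtain x y where "x<n" "y<n" "becomes_disconnected \<tau> T P \<epsilon> x y s"
      using split_event[OF vi_inc[OF v] vi_eps[OF v]] by blast
    then show "s \<in> ?U" by force
  qed
  have finU: "finite ?U" using bd_count[OF vi_inc[OF v]] by auto
  have "card ?U \<le> (\<Sum>p\<in>?I. card {s. becomes_disconnected \<tau> T P \<epsilon> (fst p) (snd p) s})"
    by (rule card_UN_le) simp
  also have "\<dots> \<le> card ?I * \<tau>"
  proof -
    have H: "\<And>p. p \<in> ?I \<Longrightarrow> card {s. becomes_disconnected \<tau> T P \<epsilon> (fst p) (snd p) s} \<le> \<tau>"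
      using bd_count[OF vi_inc[OF v]] by blast
    have "(\<Sum>p\<in>?I. card {s. becomes_disconnected \<tau> T P \<epsilon> (fst p) (snd p) s}) \<le> of_nat (card ?I) * \<tau>"
      by (rule sum_bounded_above[OF H])
    then show ?thesis by simp
  qed
  also have "\<dots> = n * n * \<tau>" by simp
  finally show ?thesis using inj_card_bound[OF inj sub finU] by simp
qed

lemma vertices_card:
  assumes v: "valid_input n \<tau> T P \<epsilon>"
  shows "finite (reeb_vertices n \<tau> T P \<epsilon>) \<and> card (reeb_vertices n \<tau> T P \<epsilon>) \<le> 4 * n * n * \<tau>"
proof -
  let ?S = "{(T 0, C, StartV) | C. C \<in> components n T P \<epsilon> (T 0)}"
  let ?E = "{(T \<tau>, C, EndV) | C. C \<in> components n T P \<epsilon> (T \<tau>)}"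
  let ?M = "{(s, C, MergeV) | s C. is_merge n \<tau> T P \<epsilon> s C}"
  let ?Sp = "{(s, C, SplitV) | s C. is_split n \<tau> T P \<epsilon> s C}"
  have S: "?S = (\<lambda>C. (T 0, C, StartV)) ` components n T P \<epsilon> (T 0)" by auto
  have E: "?E = (\<lambda>C. (T \<tau>, C, EndV)) ` components n T P \<epsilon> (T \<tau>)" by auto
  have fS: "finite ?S" "card ?S \<le> n"
  proof -
    have "card ?S \<le> card (components n T P \<epsilon> (T 0))" unfolding S by (rule card_image_le) (simp add: card_components)
    then show "card ?S \<le> n" using card_components[of n T P \<epsilon> "T 0"] by simp
    show "finite ?S" unfolding S using card_components[of n T P \<epsilon> "T 0"] by simp
  qed
  have fE: "finite ?E" "card ?E \<le> n"
  proof -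
    have "card ?E \<le> card (components n T P \<epsilon> (T \<tau>))" unfolding E by (rule card_image_le) (simp add: card_components)
    then show "card ?E \<le> n" using card_components[of n T P \<epsilon> "T \<tau>"] by simp
    show "finite ?E" unfolding E using card_components[of n T P \<epsilon> "T \<tau>"] by simp
  qed
  have fM: "finite ?M" "card ?M \<le> n*n*\<tau>" using merges_card[OF v] by auto
  have fSp: "finite ?Sp" "card ?Sp \<le> n*n*\<tau>" using splits_card[OF v] by auto
  have eq: "reeb_vertices n \<tau> T P \<epsilon> = ?S \<union> ?E \<union> ?M \<union> ?Sp" by (simp add: reeb_vertices_def)
  have fin: "finite (reeb_vertices n \<tau> T P \<epsilon>)" unfolding eq using fS fE fM fSp by simp
  have "card (reeb_vertices n \<tau> T P \<epsilon>) \<le> card ?S + card ?E + card ?M + card ?Sp"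
    unfolding eq
  proof -
    have "card (?S \<union> ?E \<union> ?M \<union> ?Sp) \<le> card (?S \<union> ?E \<union> ?M) + card ?Sp" by (rule card_Un_le)
    moreover have "card (?S \<union> ?E \<union> ?M) \<le> card (?S \<union> ?E) + card ?M" by (rule card_Un_le)
    moreover have "card (?S \<union> ?E) \<le> card ?S + card ?E" by (rule card_Un_le)
    ultimately show "card (?S \<union> ?E \<union> ?M \<union> ?Sp) \<le> card ?S + card ?E + card ?M + card ?Sp" by linarith
  qed
  also have "\<dots> \<le> n + n + n*n*\<tau> + n*n*\<tau>" using fS fE fM fSp by simp
  also have "\<dots> \<le> 4*n*n*\<tau>"
  proof -
    have t: "1 \<le> \<tau>" using v by (simp add: valid_input_def)
    have "n \<le> n*n*\<tau>"
    proof (cases "n = 0")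
      case False
      then have "n*1*1 \<le> n*n*\<tau>" using t by (intro mult_le_mono) auto
      then show ?thesis by simp
    qed simp
    moreover have "4*n*n*\<tau> = 4*(n*n*\<tau>)" by simp
    ultimately show ?thesis by linarith
  qed
  finally show ?thesis using fin by simp
qed



lemma V_time:
  assumes v: "valid_input n \<tau> T P \<epsilon>" and u: "u \<in> reeb_vertices n \<tau> T P \<epsilon>"
  shows "T 0 \<le> fst u \<and> fst u \<le> T \<tau>"
proof -
  have "T 0 \<le> T \<tau>" using T_mono[OF vi_inc[OF v], of 0 \<tau>] by simp
  then show ?thesis using u by (auto simp: reeb_vertices_def is_merge_def is_split_def)
qed

lemma in_sets_V:
  assumes vv: "v \<in> reeb_vertices n \<tau> T P \<epsilon>" and D: "D \<in> in_sets n T P \<epsilon> v"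
  shows "(v = (fst v, D, EndV) \<and> fst v = T \<tau> \<and> D \<in> components n T P \<epsilon> (fst v)) \<or>
         (v = (fst v, D, SplitV) \<and> is_split n \<tau> T P \<epsilon> (fst v) D) \<or>
         (\<exists>C. v = (fst v, C, MergeV) \<and> is_merge n \<tau> T P \<epsilon> (fst v) C \<and> D \<subseteq> C)"
proof -
  obtain s C k where v: "v = (s, C, k)" by (cases v) auto
  show ?thesis
  proof (cases k)
    case StartV then show ?thesis using D v by simp
  next
    case EndV then show ?thesis using D v vv by (auto simp: reeb_vertices_def)
  next
    case MergeV then show ?thesis using D v vv by (auto simp: reeb_vertices_def parts_before_def)
  next
    case SplitV then show ?thesis using D v vv by (auto simp: reeb_vertices_def)
  qed
qed

lemma out_card:
  assumes v: "valid_input n \<tau> T P \<epsilon>" and u: "u \<in> reeb_vertices n \<tau> T P \<epsilon>"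
  shows "finite (out_sets n T P \<epsilon> u) \<and> card (out_sets n T P \<epsilon> u) \<le> 2"
proof -
  obtain s C k where uu: "u = (s, C, k)" by (cases u) auto
  show ?thesis
  proof (cases k)
    case SplitV
    then have "is_split n \<tau> T P \<epsilon> s C" using u uu by (auto simp: reeb_vertices_def)
    then show ?thesis using parts_after_card[OF v] uu SplitV by simp
  qed (use uu in auto)
qed

lemma edge_comp:
  "(u, D, v) \<in> reeb_edges n \<tau> T P \<epsilon> \<Longrightarrow> comp_on n T P \<epsilon> D {fst u<..<fst v}"
  by (simp add: reeb_edges_def)

lemma comp_on_sub: "comp_on n T P \<epsilon> D I \<Longrightarrow> J \<subseteq> I \<Longrightarrow> comp_on n T P \<epsilon> D J"
  by (auto simp: comp_on_def)

lemma edge_lt: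
  assumes v: "valid_input n \<tau> T P \<epsilon>" and e1: "(u, D, v1) \<in> reeb_edges n \<tau> T P \<epsilon>"
    and e2: "(u, D, v2) \<in> reeb_edges n \<tau> T P \<epsilon>" and lt: "fst v1 < fst v2"
  shows False
proof -
  let ?s1 = "fst v1" and ?s2 = "fst v2"
  have v1V: "v1 \<in> reeb_vertices n \<tau> T P \<epsilon>" and D1: "D \<in> in_sets n T P \<epsilon> v1" and u1: "fst u < ?s1"
    using e1 by (auto simp: reeb_edges_def)
  have v2V: "v2 \<in> reeb_vertices n \<tau> T P \<epsilon>" using e2 by (auto simp: reeb_edges_def)
  have co: "comp_on n T P \<epsilon> D {fst u<..<?s2}" using edge_comp[OF e2] .
  have Ds1: "D \<in> components n T P \<epsilon> ?s1" using co u1 lt by (simp add: comp_on_def)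
  show False
    using in_sets_V[OF v1V D1]
  proof (elim disjE exE conjE)
    assume "?s1 = T \<tau>"
    then show False using V_time[OF v v2V] lt by simp
  next
    assume sp: "is_split n \<tau> T P \<epsilon> ?s1 D"
    have "comp_on n T P \<epsilon> D {?s1<..<?s1 + (?s2 - ?s1)}" by (rule comp_on_sub[OF co]) (use u1 lt in auto)
    then show False using split_not_after[OF sp, of "?s2 - ?s1"] lt by simp
  next
    fix C assume m: "is_merge n \<tau> T P \<epsilon> ?s1 C" and sub: "D \<subseteq> C"
    have Cc: "C \<in> components n T P \<epsilon> ?s1" using m by (simp add: is_merge_def)
    have "D = C" using comp_sub_eq[OF sym_Rel Ds1[unfolded components_alt] Cc[unfolded components_alt] sub] .
    moreover have "comp_on n T P \<epsilon> D {?s1 - (?s1 - fst u)<..<?s1}" by (rule comp_on_sub[OF co]) (use u1 lt in auto)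
    ultimately show False using merge_not_before[OF m, of "?s1 - fst u"] u1 by simp
  qed
qed

lemma edge_eq:
  assumes v: "valid_input n \<tau> T P \<epsilon>" and e1: "(u, D, v1) \<in> reeb_edges n \<tau> T P \<epsilon>"
    and e2: "(u, D, v2) \<in> reeb_edges n \<tau> T P \<epsilon>" and eq: "fst v1 = fst v2"
  shows "v1 = v2"
proof -
  define s where "s = fst v1"
  have v1V: "v1 \<in> reeb_vertices n \<tau> T P \<epsilon>" and D1: "D \<in> in_sets n T P \<epsilon> v1" and u1: "fst u < s"
    using e1 by (auto simp: reeb_edges_def s_def)
  have v2V: "v2 \<in> reeb_vertices n \<tau> T P \<epsilon>" and D2: "D \<in> in_sets n T P \<epsilon> v2"
    using e2 by (auto simp: reeb_edges_def)
  have co: "comp_on n T P \<epsilon> D {s - (s - fst u)<..<s}" using edge_comp[OF e1] by (simp add: s_def)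
  have nm: False if m: "is_merge n \<tau> T P \<epsilon> s C" "D \<subseteq> C" "D \<in> components n T P \<epsilon> s" for C
  proof -
    have Cc: "C \<in> components n T P \<epsilon> s" using m by (simp add: is_merge_def)
    have "D = C" using comp_sub_eq[OF sym_Rel m(3)[unfolded components_alt] Cc[unfolded components_alt] m(2)] .
    then show False using merge_not_before[OF m(1), of "s - fst u"] co u1 by simp
  qed
  have c1: "(v1 = (s, D, EndV) \<and> s = T \<tau> \<and> D \<in> components n T P \<epsilon> s) \<or>
         (v1 = (s, D, SplitV) \<and> is_split n \<tau> T P \<epsilon> s D) \<or>
         (\<exists>C. v1 = (s, C, MergeV) \<and> is_merge n \<tau> T P \<epsilon> s C \<and> D \<subseteq> C)"
    using in_sets_V[OF v1V D1] s_def by simp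
  have c2: "(v2 = (s, D, EndV) \<and> s = T \<tau> \<and> D \<in> components n T P \<epsilon> s) \<or>
         (v2 = (s, D, SplitV) \<and> is_split n \<tau> T P \<epsilon> s D) \<or>
         (\<exists>C. v2 = (s, C, MergeV) \<and> is_merge n \<tau> T P \<epsilon> s C \<and> D \<subseteq> C)"
    using in_sets_V[OF v2V D2] s_def eq by simp
  have spc: "D \<in> components n T P \<epsilon> s \<and> s < T \<tau>" if "is_split n \<tau> T P \<epsilon> s D"
    using that by (simp add: is_split_def)
  show ?thesis
    using c1 c2
  proof (elim disjE exE conjE)
    fix C1 C2 assume "v1 = (s, C1, MergeV)" "is_merge n \<tau> T P \<epsilon> s C1"
      "v2 = (s, C2, MergeV)" "is_merge n \<tau> T P \<epsilon> s C2"
    then show ?thesis using merge_unique[OF v] by blast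
  qed (use nm spc in auto)
qed

lemma edges_card:
  assumes v: "valid_input n \<tau> T P \<epsilon>"
  shows "finite (reeb_edges n \<tau> T P \<epsilon>) \<and> card (reeb_edges n \<tau> T P \<epsilon>) \<le> 2 * card (reeb_vertices n \<tau> T P \<epsilon>)"
proof -
  let ?V = "reeb_vertices n \<tau> T P \<epsilon>" and ?E = "reeb_edges n \<tau> T P \<epsilon>"
  let ?g = "\<lambda>(u::vertex, D::nat set, v::vertex). (u, D)"
  have finV: "finite ?V" using vertices_card[OF v] by simp
  have inj: "inj_on ?g ?E"
  proof (rule inj_onI)
    fix p q assume p: "p \<in> ?E" and q: "q \<in> ?E" and e: "?g p = ?g q"
    obtain u D v1 where p': "p = (u, D, v1)" by (cases p) auto
    obtain u' D' v2 where q': "q = (u', D', v2)" by (cases q) auto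
    have uu: "u' = u" "D' = D" using e p' q' by auto
    have e1: "(u, D, v1) \<in> ?E" and e2: "(u, D, v2) \<in> ?E" using p q p' q' uu by auto
    have "\<not> fst v1 < fst v2" using edge_lt[OF v e1 e2] by blast
    moreover have "\<not> fst v2 < fst v1" using edge_lt[OF v e2 e1] by blast
    ultimately have "fst v1 = fst v2" by simp
    then have "v1 = v2" using edge_eq[OF v e1 e2] by simp
    then show "p = q" using p' q' uu by simp
  qed
  have sub: "?g ` ?E \<subseteq> Sigma ?V (out_sets n T P \<epsilon>)" by (auto simp: reeb_edges_def)
  have finS: "finite (Sigma ?V (out_sets n T P \<epsilon>))"
    using finV out_card[OF v] by (intro finite_SigmaI) auto
  have cS: "card (Sigma ?V (out_sets n T P \<epsilon>)) = (\<Sum>u\<in>?V. card (out_sets n T P \<epsilon> u))"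
    using finV out_card[OF v] by (intro card_SigmaI) auto
  have H: "\<And>u. u \<in> ?V \<Longrightarrow> card (out_sets n T P \<epsilon> u) \<le> 2" using out_card[OF v] by blast
  have "(\<Sum>u\<in>?V. card (out_sets n T P \<epsilon> u)) \<le> of_nat (card ?V) * 2"
    by (rule sum_bounded_above[OF H])
  then show ?thesis using inj_card_bound[OF inj sub finS] cS by simp
qed



locale constr =
  fixes n :: nat and \<tau> :: nat
  assumes n2: "2 \<le> n" and t1: "1 \<le> \<tau>"
begin

definition "m = n div 2"
definition "v = real (n*n)"
definition Tc :: "nat \<Rightarrow> real" where "Tc i = real i"
definition G :: "nat \<Rightarrow> nat \<Rightarrow> real" where
  "G x i = (if x < m then - real x else real ((x - m) * m) + 1/2 - (if even i then 0 else v))"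
definition ee :: "real^2" where "ee = axis 1 1"
definition Pc :: "nat \<Rightarrow> nat \<Rightarrow> real^2" where "Pc x i = G x i *\<^sub>R ee"
definition "eps = (1/8::real)"
definition W :: "real \<Rightarrow> real" where
  "W t = (let i = seg Tc t in if even i then t - real i else 1 - (t - real i))"
definition F :: "nat \<Rightarrow> real \<Rightarrow> real" where
  "F x t = (if x < m then - real x else real ((x - m) * m) + 1/2 - v * W t)"
definition kap :: "nat \<Rightarrow> nat \<Rightarrow> nat" where "kap x k = (x - m) * m + k"

lemma m_pos: "1 \<le> m" using n2 by (simp add: m_def)
lemma m_lt: "m < n" using n2 by (simp add: m_def)

lemma inc: "\<forall>i<\<tau>. Tc i < Tc (Suc i)" by (simp add: Tc_def)
lemma inc_all: "\<forall>i<k. Tc i < Tc (Suc i)" by (simp add: Tc_def)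

lemma pos_F: "pos Tc Pc x t = F x t *\<^sub>R ee"
proof -
  define i where "i = seg Tc t"
  have "pos Tc Pc x t = (G x i + (t - real i) * (G x (Suc i) - G x i)) *\<^sub>R ee"
    by (simp add: pos_def i_def[symmetric] Tc_def Pc_def algebra_simps Let_def)
  also have "G x i + (t - real i) * (G x (Suc i) - G x i) = F x t"
    by (cases "even i") (auto simp: G_def F_def W_def i_def[symmetric] Let_def algebra_simps)
  finally show ?thesis .
qed

lemma dist_ee: "dist (a *\<^sub>R ee) (b *\<^sub>R ee) = \<bar>a - b\<bar>"
proof -
  have "dist (a *\<^sub>R ee) (b *\<^sub>R ee) = norm ((a - b) *\<^sub>R ee)" by (simp add: dist_norm scaleR_diff_left)
  also have "\<dots> = \<bar>a - b\<bar>" by (simp add: ee_def)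
  finally show ?thesis .
qed

lemma dc_iff: "directly_connected Tc Pc eps x y t \<longleftrightarrow> \<bar>F x t - F y t\<bar> \<le> 1/4"
  unfolding directly_connected_def pos_F dist_ee eps_def by simp

lemma seg_range: assumes "0 \<le> t" shows "real (seg Tc t) \<le> t \<and> t \<le> real (seg Tc t) + 1"
proof -
  obtain k :: nat where k: "t \<le> real k" using real_arch_simple by blast
  have ex: "t \<le> Tc (Suc k)" using k by (simp add: Tc_def)
  have a: "t \<le> Tc (Suc (seg Tc t))" unfolding seg_def by (rule LeastI[of "\<lambda>i. t \<le> Tc (Suc i)", OF ex])
  have b: "real (seg Tc t) \<le> t"
  proof (cases "seg Tc t")
    case 0 then show ?thesis using assms by simp
  next
    case (Suc j)
    then have "j < seg Tc t" by simp
    then have "\<not> t \<le> Tc (Suc j)" unfolding seg_def by (rule not_less_Least)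
    then show ?thesis using Suc by (simp add: Tc_def)
  qed
  show ?thesis using a b by (simp add: Tc_def)
qed

lemma seg_in: assumes "real i < t" "t \<le> real i + 1" shows "seg Tc t = i"
proof -
  have h: "Tc i < t" "t \<le> Tc (Suc i)" using assms by (simp_all add: Tc_def)
  show ?thesis using seg_eq[OF inc_all[of "Suc i"] _ h] by simp
qed

lemma W_in: assumes "real i < t" "t \<le> real i + 1"
  shows "W t = (if even i then t - real i else 1 - (t - real i))"
  using seg_in[OF assms] by (simp add: W_def)

end


lemma nat_real_dist: "(a::nat) \<noteq> b \<Longrightarrow> 1 \<le> \<bar>real a - real b\<bar>"
  by (cases "a < b") auto

context constr begin

definition key :: "nat \<Rightarrow> nat \<Rightarrow> nat" where
  "key x y = (if x < m then kap y x else kap x y)"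

lemma v_pos: "v > 0" using n2 by (simp add: v_def)

lemma kap_inj: assumes "\<not> x < m" "\<not> x' < m" "k < m" "k' < m" "kap x k = kap x' k'"
  shows "x = x' \<and> k = k'"
proof -
  have m0: "m \<noteq> 0" using m_pos by simp
  have e1: "kap x k = k + (x - m) * m" "kap x' k' = k' + (x' - m) * m" by (simp_all add: kap_def)
  have "kap x k div m = x - m" unfolding e1 using div_mult_self1[OF m0, of k "x-m"] assms(3) by simp
  moreover have "kap x' k' div m = x' - m" unfolding e1 using div_mult_self1[OF m0, of k' "x'-m"] assms(4) by simp
  moreover have "kap x k mod m = k" unfolding e1 using mod_mult_self1[of k "x-m" m] assms(3) by simp
  moreover have "kap x' k' mod m = k'" unfolding e1 using mod_mult_self1[of k' "x'-m" m] assms(4) by simp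
  ultimately have "x - m = x' - m" "k = k'" using assms(5) by metis+
  then show ?thesis using assms(1,2) by simp
qed

lemma kap_bound: assumes "x < n" "\<not> x < m" "k < m" shows "kap x k + 1 \<le> n * n"
proof -
  have "kap x k + 1 \<le> (x - m) * m + m" using assms by (simp add: kap_def)
  also have "\<dots> = (x - m + 1) * m" by simp
  also have "\<dots> \<le> n * n" using assms m_lt by (intro mult_le_mono) auto
  finally show ?thesis .
qed

lemma F_diff: assumes "\<not> x < m" "k < m"
  shows "F x t - F k t = real (kap x k) + 1/2 - v * W t"
  using assms by (simp add: F_def kap_def)

lemma mixed_of_dc: assumes "x < n" "y < n" "x \<noteq> y" "directly_connected Tc Pc eps x y t"
  shows "(x < m) = (\<not> y < m)"
proof (rule ccontr)
  assume h: "(x < m) \<noteq> (\<not> y < m)"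
  have d: "\<bar>F x t - F y t\<bar> \<le> 1/4" using assms(4) dc_iff by simp
  show False
  proof (cases "x < m")
    case True
    then have "y < m" using h by simp
    then have "\<bar>F x t - F y t\<bar> = \<bar>real y - real x\<bar>" using True by (simp add: F_def abs_minus_commute)
    then show False using nat_real_dist[of y x] assms(3) d by simp
  next
    case False
    then have y: "\<not> y < m" using h by simp
    have ne: "(x - m) * m \<noteq> (y - m) * m" using False y assms(3) m_pos by simp
    have "\<bar>F x t - F y t\<bar> = \<bar>real ((x - m) * m) - real ((y - m) * m)\<bar>" using False y by (simp add: F_def)
    then show False using nat_real_dist[OF ne] d by simp
  qed
qed

lemma dc_key: assumes "(x < m) = (\<not> y < m)"
  shows "directly_connected Tc Pc eps x y t \<longleftrightarrow> \<bar>real (key x y) + 1/2 - v * W t\<bar> \<le> 1/4"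
proof (cases "x < m")
  case True
  then have "\<not> y < m" using assms by simp
  have "\<bar>F x t - F y t\<bar> = \<bar>F y t - F x t\<bar>" by (rule abs_minus_commute)
  then show ?thesis using True F_diff[OF \<open>\<not> y < m\<close> True, of t] by (simp add: dc_iff key_def)
next
  case False
  then have "y < m" using assms by simp
  then show ?thesis using False F_diff[of x y t] by (simp add: dc_iff key_def)
qed

lemma key_bound: assumes "x < n" "y < n" "(x < m) = (\<not> y < m)" shows "real (key x y) + 1 \<le> v"
proof -
  have "key x y + 1 \<le> n * n" using assms kap_bound by (auto simp: key_def)
  then show ?thesis unfolding v_def by linarith
qed

lemma key_inj: assumes "x < n" "y < n" "(x < m) = (\<not> y < m)" "x' < n" "y' < n" "(x' < m) = (\<not> y' < m)"
  "key x y = key x' y'" shows "{x,y} = {x',y'}"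
  using assms kap_inj unfolding key_def by (cases "x < m"; cases "x' < m") (auto dest: kap_inj)

lemma dc_interior: assumes "x < n" "y < n" "x \<noteq> y" "directly_connected Tc Pc eps x y s" "0 \<le> s"
  shows "real (seg Tc s) < s \<and> s < real (seg Tc s) + 1"
proof -
  define i where "i = seg Tc s"
  have mix: "(x < m) = (\<not> y < m)" using mixed_of_dc assms by blast
  have a: "\<bar>real (key x y) + 1/2 - v * W s\<bar> \<le> 1/4" using dc_key[OF mix] assms by simp
  have kb: "real (key x y) + 1 \<le> v" using key_bound[OF assms(1,2) mix] .
  have r: "real i \<le> s" "s \<le> real i + 1" using seg_range[OF assms(5)] i_def by auto
  have nW: "W s \<noteq> 0 \<and> W s \<noteq> 1"
  proof
    show "W s \<noteq> 0" proof assume "W s = 0" then show False using a by simp qed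
    show "W s \<noteq> 1" proof assume "W s = 1" then show False using a kb by simp qed
  qed
  have "s \<noteq> real i"
  proof
    assume e: "s = real i"
    have "W s = (if even i then s - real i else 1 - (s - real i))" by (simp add: W_def i_def[symmetric] Let_def)
    then have "W s = (if even i then 0 else 1)" using e by simp
    then show False using nW by (cases "even i") auto
  qed
  moreover have "s \<noteq> real i + 1"
  proof
    assume e: "s = real i + 1"
    then have "real i < s" by simp
    then show False using W_in[of i s] e nW by (cases "even i") auto
  qed
  ultimately show ?thesis using r i_def by auto
qed

lemma no_isolated:
  assumes "x < n" "y < n" "x \<noteq> y" "directly_connected Tc Pc eps x y s" "0 \<le> s"
    and d1: "\<delta>1 > 0" "\<forall>t\<in>{s-\<delta>1<..<s}. \<not> directly_connected Tc Pc eps x y t"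
    and d2: "\<delta>2 > 0" "\<forall>t\<in>{s<..<s+\<delta>2}. \<not> directly_connected Tc Pc eps x y t"
  shows False
proof -
  define i where "i = seg Tc s"
  have mix: "(x < m) = (\<not> y < m)" using mixed_of_dc assms by blast
  define q where "q = real (key x y) + 1/2"
  have dck: "directly_connected Tc Pc eps x y t \<longleftrightarrow> \<bar>q - v * W t\<bar> \<le> 1/4" for t
    using dc_key[OF mix] q_def by simp
  have a: "\<bar>q - v * W s\<bar> \<le> 1/4" using dck assms by simp
  have si: "real i < s" "s < real i + 1" using dc_interior[OF assms(1-5)] i_def by auto
  define h where "h = min (min \<delta>1 \<delta>2) (min (min (s - real i) (real i + 1 - s)) (1 / (4 * v))) / 2"
  have hpos: "h > 0" using si d1 d2 v_pos by (simp add: h_def)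
  have h1a: "h < \<delta>1" using hpos by (auto simp: h_def)
  have h1b: "h < \<delta>2" using hpos by (auto simp: h_def)
  have h1c: "h < s - real i" using hpos by (auto simp: h_def)
  have h1d: "h < real i + 1 - s" using hpos by (auto simp: h_def)
  have h1e: "h \<le> 1 / (4 * v)"
  proof -
    define M where "M = min (min \<delta>1 \<delta>2) (min (min (s - real i) (real i + 1 - s)) (1 / (4 * v)))"
    have "M \<le> 1 / (4 * v)" unfolding M_def by linarith
    moreover have "h = M / 2" by (simp add: h_def M_def)
    moreover have "M > 0" using hpos \<open>h = M/2\<close> by simp
    ultimately show ?thesis by linarith
  qed
  note h1 = h1a h1b h1c h1d h1e
  have vh: "v * h \<le> 1/4" using h1(5) v_pos by (simp add: field_simps)
  have vh0: "v * h > 0" using hpos v_pos by simp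
  have Wp: "W (s + h) = W s + (if even i then h else - h)"
    using W_in[of i "s+h"] W_in[of i s] si h1 hpos by (cases "even i") auto
  have Wm: "W (s - h) = W s - (if even i then h else - h)"
    using W_in[of i "s-h"] W_in[of i s] si h1 hpos by (cases "even i") auto
  have np: "\<not> \<bar>q - v * W (s + h)\<bar> \<le> 1/4" using d2 h1 hpos dck by simp
  have nm: "\<not> \<bar>q - v * W (s - h)\<bar> \<le> 1/4" using d1 h1 hpos dck by simp
  show False
  proof (cases "even i")
    case True
    have "q - v * W (s + h) = (q - v * W s) - v * h" by (subst Wp) (simp add: True algebra_simps)
    moreover have "q - v * W (s - h) = (q - v * W s) + v * h" by (subst Wm) (simp add: True algebra_simps)
    ultimately show False using np nm a vh vh0 unfolding abs_le_iff by linarith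
  next
    case False
    have "q - v * W (s + h) = (q - v * W s) + v * h" by (subst Wp) (simp add: False algebra_simps)
    moreover have "q - v * W (s - h) = (q - v * W s) - v * h" by (subst Wm) (simp add: False algebra_simps)
    ultimately show False using np nm a vh vh0 unfolding abs_le_iff by linarith
  qed
qed

lemma gp: "general_position n \<tau> Tc Pc eps"
  unfolding general_position_def
proof (intro allI impI)
  fix x y s b x' y' b'
  assume H: "pair_event n \<tau> Tc Pc eps x y s b \<and> pair_event n \<tau> Tc Pc eps x' y' s b'"
  have e1: "x < n" "y < n" "x \<noteq> y" "directly_connected Tc Pc eps x y s" "0 \<le> s"
    using H by (auto simp: pair_event_def becomes_connected_def becomes_disconnected_def Tc_def split: if_splits)
  have e2: "x' < n" "y' < n" "x' \<noteq> y'" "directly_connected Tc Pc eps x' y' s"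
    using H by (auto simp: pair_event_def becomes_connected_def becomes_disconnected_def split: if_splits)
  have mix1: "(x < m) = (\<not> y < m)" using mixed_of_dc e1 by blast
  have mix2: "(x' < m) = (\<not> y' < m)" using mixed_of_dc e2 by blast
  have a1: "\<bar>real (key x y) + 1/2 - v * W s\<bar> \<le> 1/4" using dc_key[OF mix1] e1 by simp
  have a2: "\<bar>real (key x' y') + 1/2 - v * W s\<bar> \<le> 1/4" using dc_key[OF mix2] e2 by simp
  have "\<bar>real (key x y) - real (key x' y')\<bar> < 1" using a1 a2 unfolding abs_le_iff abs_less_iff by linarith
  then have "key x y = key x' y'" using nat_real_dist by force
  then have pe: "{x,y} = {x',y'}" using key_inj e1 e2 mix1 mix2 by blast
  moreover have "b = b'"
  proof (rule ccontr)
    assume bb: "b \<noteq> b'"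
    have sym: "directly_connected Tc Pc eps x' y' t \<longleftrightarrow> directly_connected Tc Pc eps x y t" for t
      using pe dc_sym by (metis doubleton_eq_iff)
    obtain \<delta>1 \<delta>2 where d: "\<delta>1 > 0" "\<forall>t\<in>{s-\<delta>1<..<s}. \<not> directly_connected Tc Pc eps x y t"
      "\<delta>2 > 0" "\<forall>t\<in>{s<..<s+\<delta>2}. \<not> directly_connected Tc Pc eps x y t"
    proof (cases b)
      case True
      then have "\<not> b'" using bb by simp
      then show ?thesis using H True that sym by (auto simp: pair_event_def becomes_connected_def becomes_disconnected_def)
    next
      case False
      then have "b'" using bb by simp
      then show ?thesis using H False that sym by (auto simp: pair_event_def becomes_connected_def becomes_disconnected_def)
    qed
    show False using no_isolated[OF e1 d] .
  qed
  ultimately show "{x, y} = {x', y'} \<and> b = b'" by simp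
qed

lemma valid: "valid_input n \<tau> Tc Pc eps"
  using t1 inc gp by (simp add: valid_input_def eps_def)

end


lemma closed_class: assumes "\<And>z w. z \<in> S \<Longrightarrow> (z,w) \<in> r \<Longrightarrow> w \<in> S" "x \<in> S" shows "r\<^sup>*``{x} \<subseteq> S"
proof
  fix y assume "y \<in> r\<^sup>*``{x}"
  then have "(x,y) \<in> r\<^sup>*" by simp
  then show "y \<in> S" by (induction rule: rtrancl_induct) (use assms in auto)
qed

context constr begin

definition "qq x k = real (kap x k) + 1/2"

lemma key_mk: "\<not> x < m \<Longrightarrow> key x k = kap x k" by (simp add: key_def)
lemma key_km: "k < m \<Longrightarrow> key k x = kap x k" by (simp add: key_def)

lemma nbr_x: assumes x: "\<not> x < m" "x < n" and k: "k < m"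
  and c: "\<bar>qq x k - v * W t\<bar> < 1/2" and y: "y < n" "directly_connected Tc Pc eps x y t" "y \<noteq> x"
  shows "y = k \<and> \<bar>qq x k - v * W t\<bar> \<le> 1/4"
proof -
  have mix: "(x < m) = (\<not> y < m)" using mixed_of_dc[OF x(2) y(1) y(3)[symmetric] y(2)] by simp
  then have ym: "y < m" using x by simp
  have "\<bar>real (kap x y) + 1/2 - v * W t\<bar> \<le> 1/4" using dc_key[OF mix] y key_mk[OF x(1)] by simp
  then have "\<bar>real (kap x y) - real (kap x k)\<bar> < 1" using c unfolding qq_def abs_le_iff abs_less_iff by linarith
  then have "kap x y = kap x k" using nat_real_dist by force
  then have "y = k" using kap_inj[OF x(1) x(1) ym k] by simp
  then show ?thesis using \<open>\<bar>real (kap x y) + 1/2 - v * W t\<bar> \<le> 1/4\<close> by (simp add: qq_def)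
qed

lemma nbr_k: assumes x: "\<not> x < m" "x < n" and k: "k < m"
  and c: "\<bar>qq x k - v * W t\<bar> < 1/2" and y: "y < n" "directly_connected Tc Pc eps k y t" "y \<noteq> k"
  shows "y = x \<and> \<bar>qq x k - v * W t\<bar> \<le> 1/4"
proof -
  have kn: "k < n" using k m_lt by simp
  have mix: "(k < m) = (\<not> y < m)" using mixed_of_dc[OF kn y(1) y(3)[symmetric] y(2)] by simp
  then have ym: "\<not> y < m" using k by simp
  have "\<bar>real (kap y k) + 1/2 - v * W t\<bar> \<le> 1/4" using dc_key[OF mix] y key_km[OF k] by simp
  then have "\<bar>real (kap y k) - real (kap x k)\<bar> < 1" using c unfolding qq_def abs_le_iff abs_less_iff by linarith
  then have "kap y k = kap x k" using nat_real_dist by force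
  then have "y = x" using kap_inj[OF ym x(1) k k] by simp
  then show ?thesis using \<open>\<bar>real (kap y k) + 1/2 - v * W t\<bar> \<le> 1/4\<close> by (simp add: qq_def)
qed

lemma compA: assumes x: "\<not> x < m" "x < n" and k: "k < m" and c: "\<bar>qq x k - v * W t\<bar> \<le> 1/4"
  shows "{x,k} \<in> components n Tc Pc eps t"
proof -
  let ?r = "Rel n Tc Pc eps t"
  have kn: "k < n" using k m_lt by simp
  have c2: "\<bar>qq x k - v * W t\<bar> < 1/2" using c by simp
  have cl: "?r\<^sup>*``{x} \<subseteq> {x,k}"
  proof (rule closed_class)
    fix z w assume z: "z \<in> {x,k}" and zw: "(z,w) \<in> ?r"
    show "w \<in> {x,k}"
    proof (cases "w = z")
      case False
      show ?thesis using z zw nbr_x[OF x k c2, of w] nbr_k[OF x k c2, of w] False by auto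
    qed (use z in auto)
  qed simp
  have mix: "(x < m) = (\<not> k < m)" using x k by simp
  have "directly_connected Tc Pc eps x k t" using dc_key[OF mix] c key_mk[OF x(1)] by (simp add: qq_def)
  then have "(x,k) \<in> ?r" using x kn by simp
  then have "k \<in> ?r\<^sup>*``{x}" by auto
  then have "?r\<^sup>*``{x} = {x,k}" using cl by auto
  then show ?thesis using x unfolding components_alt quotient_def by blast
qed

lemma compB: assumes x: "\<not> x < m" "x < n" and k: "k < m" and c: "1/4 < \<bar>qq x k - v * W t\<bar>" "\<bar>qq x k - v * W t\<bar> < 1/2"
  shows "{x} \<in> components n Tc Pc eps t \<and> {k} \<in> components n Tc Pc eps t"
proof -
  let ?r = "Rel n Tc Pc eps t"
  have kn: "k < n" using k m_lt by simp
  have clx: "?r\<^sup>*``{x} \<subseteq> {x}"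
  proof (rule closed_class)
    fix z w assume z: "z \<in> {x}" and zw: "(z,w) \<in> ?r"
    show "w \<in> {x}" using z zw nbr_x[OF x k c(2), of w] c(1) by (cases "w = z") auto
  qed simp
  have clk: "?r\<^sup>*``{k} \<subseteq> {k}"
  proof (rule closed_class)
    fix z w assume z: "z \<in> {k}" and zw: "(z,w) \<in> ?r"
    show "w \<in> {k}" using z zw nbr_k[OF x k c(2), of w] c(1) by (cases "w = z") auto
  qed simp
  have "?r\<^sup>*``{x} = {x}" "?r\<^sup>*``{k} = {k}" using clx clk by auto
  then show ?thesis using x kn unfolding components_alt quotient_def by blast
qed

end


context constr begin

definition al :: "nat \<Rightarrow> nat \<Rightarrow> nat \<Rightarrow> real" where
  "al i x k = (if even i then real i + (qq x k - 1/4)/v else real i + 1 - (qq x k + 1/4)/v)"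
definition be :: "nat \<Rightarrow> nat \<Rightarrow> nat \<Rightarrow> real" where
  "be i x k = (if even i then real i + (qq x k + 1/4)/v else real i + 1 - (qq x k - 1/4)/v)"
definition "d0 = 1 / (4 * v)"

lemma vd0: "v * d0 = 1/4" "d0 > 0" using v_pos by (auto simp: d0_def)

lemma qq_bounds: assumes x: "\<not> x < m" "x < n" and k: "k < m" shows "1/2 \<le> qq x k" "qq x k + 1/2 \<le> v"
proof -
  show "1/2 \<le> qq x k" by (simp add: qq_def)
  have "kap x k + 1 \<le> n * n" using kap_bound[OF x(2,1) k] .
  then have "real (kap x k) + 1 \<le> v" unfolding v_def by linarith
  then show "qq x k + 1/2 \<le> v" by (simp add: qq_def)
qed

lemma times: assumes x: "\<not> x < m" "x < n" and k: "k < m"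
  shows "real i \<le> al i x k - d0" "al i x k < be i x k" "be i x k + d0 \<le> real i + 1"
proof -
  have q: "1/2 \<le> qq x k" "qq x k + 1/2 \<le> v" using qq_bounds[OF x k] by auto
  have vp: "v > 0" by (rule v_pos)
  have a1: "(qq x k - 1/4)/v - d0 = (qq x k - 1/2)/v" "(qq x k + 1/4)/v + d0 = (qq x k + 1/2)/v"
    using vp by (simp_all add: d0_def field_simps)
  have a2: "(qq x k - 1/2)/v \<ge> 0" using q vp by simp
  have a3: "(qq x k + 1/2)/v \<le> 1" using q vp by simp
  have a4: "(qq x k - 1/4)/v < (qq x k + 1/4)/v" using vp by (simp add: divide_strict_right_mono)
  show "real i \<le> al i x k - d0" using a1 a2 a3 by (simp add: al_def)
  show "al i x k < be i x k" using a4 by (simp add: al_def be_def)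
  show "be i x k + d0 \<le> real i + 1" using a1 a2 a3 by (simp add: be_def)
qed

lemma uform: assumes x: "\<not> x < m" "x < n" and k: "k < m" and t: "real i < t" "t < real i + 1"
  shows "v * W t = (if even i then qq x k - 1/4 + v * (t - al i x k) else qq x k + 1/4 - v * (t - al i x k))"
    "v * W t = (if even i then qq x k + 1/4 + v * (t - be i x k) else qq x k - 1/4 - v * (t - be i x k))"
proof -
  have vp: "v \<noteq> 0" using v_pos by simp
  have W: "W t = (if even i then t - real i else 1 - (t - real i))" using W_in[of i t] t by simp
  show "v * W t = (if even i then qq x k - 1/4 + v * (t - al i x k) else qq x k + 1/4 - v * (t - al i x k))"
    using vp by (simp add: W al_def field_simps)
  show "v * W t = (if even i then qq x k + 1/4 + v * (t - be i x k) else qq x k - 1/4 - v * (t - be i x k))"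
    using vp by (simp add: W be_def field_simps)
qed

lemma inside: assumes x: "\<not> x < m" "x < n" and k: "k < m" and t: "al i x k \<le> t" "t \<le> be i x k"
  shows "\<bar>qq x k - v * W t\<bar> \<le> 1/4"
proof -
  have tt: "real i < t" "t < real i + 1" using times[OF x k, of i] t vd0 by linarith+
  have p1: "v * (t - al i x k) \<ge> 0" using v_pos t by simp
  have p2: "v * (t - be i x k) \<le> 0" using v_pos t by (simp add: mult_nonneg_nonpos)
  show ?thesis using uform[OF x k tt] p1 p2 unfolding abs_le_iff by (cases "even i") auto
qed

lemma before: assumes x: "\<not> x < m" "x < n" and k: "k < m" and t: "al i x k - d0 < t" "t < al i x k"
  shows "1/4 < \<bar>qq x k - v * W t\<bar> \<and> \<bar>qq x k - v * W t\<bar> < 1/2"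
proof -
  have tt: "real i < t" "t < real i + 1" using times[OF x k, of i] t vd0 by linarith+
  have p1: "v * (t - al i x k) < 0" using v_pos t by (simp add: mult_pos_neg)
  have "v * (-d0) < v * (t - al i x k)" using v_pos t by (intro mult_strict_left_mono) auto
  then have p2: "v * (t - al i x k) > -1/4" using vd0 by simp
  show ?thesis using uform(1)[OF x k tt] p1 p2 unfolding abs_less_iff by (cases "even i") auto
qed

lemma after: assumes x: "\<not> x < m" "x < n" and k: "k < m" and t: "be i x k < t" "t < be i x k + d0"
  shows "1/4 < \<bar>qq x k - v * W t\<bar> \<and> \<bar>qq x k - v * W t\<bar> < 1/2"
proof -
  have tt: "real i < t" "t < real i + 1" using times[OF x k, of i] t vd0 by linarith+
  have p1: "v * (t - be i x k) > 0" using v_pos t by simp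
  have "v * (t - be i x k) < v * d0" using v_pos t by (intro mult_strict_left_mono) auto
  then have p2: "v * (t - be i x k) < 1/4" using vd0 by simp
  show ?thesis using uform(2)[OF x k tt] p1 p2 unfolding abs_less_iff by (cases "even i") auto
qed

end


context constr begin

lemma merge_al: assumes x: "\<not> x < m" "x < n" and k: "k < m" and i: "i < \<tau>"
  shows "is_merge n \<tau> Tc Pc eps (al i x k) {x,k}"
proof -
  have tm: "real i \<le> al i x k - d0" "al i x k < be i x k" "be i x k + d0 \<le> real i + 1"
    using times[OF x k] by auto
  have "real i + 1 \<le> real \<tau>" using i by simp
  then have s: "Tc 0 < al i x k" "al i x k \<le> Tc \<tau>" using tm vd0 by (auto simp: Tc_def)
  have C: "{x,k} \<in> components n Tc Pc eps (al i x k)"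
    using compA[OF x k inside[OF x k order_refl less_imp_le[OF tm(2)]]] .
  have xk: "x \<noteq> k" using x k by auto
  have co: "comp_on n Tc Pc eps {x} {al i x k - d0<..<al i x k} \<and> comp_on n Tc Pc eps {k} {al i x k - d0<..<al i x k}"
  proof -
    have "{x} \<in> components n Tc Pc eps t \<and> {k} \<in> components n Tc Pc eps t" if t: "t \<in> {al i x k - d0<..<al i x k}" for t
    proof -
      have "1/4 < \<bar>qq x k - v * W t\<bar> \<and> \<bar>qq x k - v * W t\<bar> < 1/2" using before[OF x k, of i t] t by simp
      then show ?thesis using compB[OF x k] by blast
    qed
    then show ?thesis by (auto simp: comp_on_def)
  qed
  show ?thesis unfolding is_merge_def
    using s C xk co vd0 by (intro conjI exI[of _ "{x}"] exI[of _ "{k}"]) (auto intro!: exI[of _ d0])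
qed

lemma split_be: assumes x: "\<not> x < m" "x < n" and k: "k < m" and i: "i < \<tau>"
  shows "is_split n \<tau> Tc Pc eps (be i x k) {x,k}"
proof -
  have tm: "real i \<le> al i x k - d0" "al i x k < be i x k" "be i x k + d0 \<le> real i + 1"
    using times[OF x k] by auto
  have "real i + 1 \<le> real \<tau>" using i by simp
  then have s: "Tc 0 \<le> be i x k" "be i x k < Tc \<tau>" using tm vd0 by (auto simp: Tc_def)
  have C: "{x,k} \<in> components n Tc Pc eps (be i x k)"
    using compA[OF x k inside[OF x k less_imp_le[OF tm(2)] order_refl]] .
  have xk: "x \<noteq> k" using x k by auto
  have co: "comp_on n Tc Pc eps {x} {be i x k<..<be i x k + d0} \<and> comp_on n Tc Pc eps {k} {be i x k<..<be i x k + d0}"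
  proof -
    have "{x} \<in> components n Tc Pc eps t \<and> {k} \<in> components n Tc Pc eps t" if t: "t \<in> {be i x k<..<be i x k + d0}" for t
    proof -
      have "1/4 < \<bar>qq x k - v * W t\<bar> \<and> \<bar>qq x k - v * W t\<bar> < 1/2" using after[OF x k, of i t] t by simp
      then show ?thesis using compB[OF x k] by blast
    qed
    then show ?thesis by (auto simp: comp_on_def)
  qed
  show ?thesis unfolding is_split_def
    using s C xk co vd0 by (intro conjI exI[of _ "{x}"] exI[of _ "{k}"]) (auto intro!: exI[of _ d0])
qed

lemma edge_in: assumes x: "\<not> x < m" "x < n" and k: "k < m" and i: "i < \<tau>"
  shows "((al i x k, {x,k}, MergeV), {x,k}, (be i x k, {x,k}, SplitV)) \<in> reeb_edges n \<tau> Tc Pc eps"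
proof -
  have tm: "al i x k < be i x k" using times[OF x k] by auto
  have co: "comp_on n Tc Pc eps {x,k} {al i x k<..<be i x k}"
    unfolding comp_on_def
  proof
    fix t assume t: "t \<in> {al i x k<..<be i x k}"
    show "{x,k} \<in> components n Tc Pc eps t" using compA[OF x k inside[OF x k, of i t]] t by simp
  qed
  show ?thesis unfolding reeb_edges_def reeb_vertices_def
    using merge_al[OF x k i] split_be[OF x k i] tm co by auto
qed

lemma al_inj: assumes x: "\<not> x < m" "x < n" and k: "k < m" and x': "\<not> x' < m" "x' < n" and k': "k' < m"
  and e: "al i x k = al i' x' k'"
  shows "i = i' \<and> x = x' \<and> k = k'"
proof -
  have t1: "real i < al i x k" "al i x k < real i + 1" using times[OF x k, of i] vd0 by linarith+
  have t2: "real i' < al i' x' k'" "al i' x' k'< real i' + 1" using times[OF x' k', of i'] vd0 by linarith+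
  have ii: "i = i'"
  proof (rule ccontr)
    assume "i \<noteq> i'"
    then consider "i < i'" | "i' < i" by linarith
    then show False
    proof cases
      case 1 then have "real i + 1 \<le> real i'" by simp
      then show False using t1 t2 e by linarith
    next
      case 2 then have "real i' + 1 \<le> real i" by simp
      then show False using t1 t2 e by linarith
    qed
  qed
  have vp: "v \<noteq> 0" using v_pos by simp
  have "qq x k = qq x' k'"
  proof (cases "even i")
    case True
    then have "(qq x k - 1/4)/v = (qq x' k' - 1/4)/v" using e ii by (simp add: al_def)
    then show ?thesis using vp by (simp add: divide_cancel_right)
  next
    case False
    then have "(qq x k + 1/4)/v = (qq x' k' + 1/4)/v" using e ii by (simp add: al_def)
    then show ?thesis using vp by (simp add: divide_cancel_right)
  qed
  then have "kap x k = kap x' k'" by (simp add: qq_def)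
  then show ?thesis using kap_inj[OF x(1) x'(1) k k'] ii by simp
qed

definition "Ix = {..<\<tau>} \<times> ({m..<n} \<times> {..<m})"

lemma card_Ix: "card Ix = \<tau> * ((n - m) * m)"
  by (simp add: Ix_def card_cartesian_product)

lemma lower:
  shows "finite (reeb_vertices n \<tau> Tc Pc eps) \<and> finite (reeb_edges n \<tau> Tc Pc eps) \<and>
    \<tau> * ((n - m) * m) \<le> card (reeb_vertices n \<tau> Tc Pc eps) \<and>
    \<tau> * ((n - m) * m) \<le> card (reeb_edges n \<tau> Tc Pc eps)"
proof -
  have fV: "finite (reeb_vertices n \<tau> Tc Pc eps)" using vertices_card[OF valid] by simp
  have fE: "finite (reeb_edges n \<tau> Tc Pc eps)" using edges_card[OF valid] by simp
  define f where "f p = (case p of (i, x, k) \<Rightarrow> (al i x k, {x,k}, MergeV))" for p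
  define g where "g p = (case p of (i, x, k) \<Rightarrow> ((al i x k, {x,k}, MergeV), {x,k}, (be i x k, {x,k}, SplitV)))" for p
  have injf: "inj_on f Ix"
  proof (rule inj_onI)
    fix p q assume p: "p \<in> Ix" and q: "q \<in> Ix" and e: "f p = f q"
    obtain i x k where p': "p = (i,x,k)" by (cases p) auto
    obtain i' x' k' where q': "q = (i',x',k')" by (cases q) auto
    have "al i x k = al i' x' k'" using e p' q' by (simp add: f_def)
    then show "p = q" using al_inj[of x k x' k' i i'] p q p' q' by (auto simp: Ix_def)
  qed
  have injg: "inj_on g Ix"
  proof (rule inj_onI)
    fix p q assume p: "p \<in> Ix" and q: "q \<in> Ix" and e: "g p = g q"
    obtain i x k where p': "p = (i,x,k)" by (cases p) auto
    obtain i' x' k' where q': "q = (i',x',k')" by (cases q) auto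
    have "al i x k = al i' x' k'" using e p' q' by (simp add: g_def)
    then show "p = q" using al_inj[of x k x' k' i i'] p q p' q' by (auto simp: Ix_def)
  qed
  have subf: "f ` Ix \<subseteq> reeb_vertices n \<tau> Tc Pc eps"
  proof
    fix z assume "z \<in> f ` Ix"
    then obtain i x k where z: "z = f (i,x,k)" "(i,x,k) \<in> Ix" by auto
    then have "is_merge n \<tau> Tc Pc eps (al i x k) {x,k}" using merge_al[of x k i] by (auto simp: Ix_def)
    then show "z \<in> reeb_vertices n \<tau> Tc Pc eps" using z by (auto simp: f_def reeb_vertices_def)
  qed
  have subg: "g ` Ix \<subseteq> reeb_edges n \<tau> Tc Pc eps"
  proof
    fix z assume "z \<in> g ` Ix"
    then obtain i x k where z: "z = g (i,x,k)" "(i,x,k) \<in> Ix" by auto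
    then show "z \<in> reeb_edges n \<tau> Tc Pc eps" using edge_in[of x k i] by (auto simp: g_def Ix_def)
  qed
  have "card Ix \<le> card (reeb_vertices n \<tau> Tc Pc eps)" by (rule card_inj_on_le[OF injf subf fV])
  moreover have "card Ix \<le> card (reeb_edges n \<tau> Tc Pc eps)" by (rule card_inj_on_le[OF injg subg fE])
  ultimately show ?thesis using fV fE card_Ix by simp
qed


lemma six_bound: "real \<tau> * real n ^ 2 \<le> 6 * real (\<tau> * ((n - m) * m))"
proof -
  have a: "n \<le> 3 * m" using n2 unfolding m_def by linarith
  have b: "n \<le> 2 * (n - m)" unfolding m_def by linarith
  have "n * n \<le> (3 * m) * (2 * (n - m))" using a b by (rule mult_le_mono)
  then have "n * n \<le> 6 * ((n - m) * m)" by (simp add: algebra_simps)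
  then have "\<tau> * (n * n) \<le> \<tau> * (6 * ((n - m) * m))" by simp
  then have "real (\<tau> * (n * n)) \<le> real (\<tau> * (6 * ((n - m) * m)))" by linarith
  then show ?thesis by (simp add: power2_eq_square algebra_simps)
qed

end


theorem theorem2:
  shows "(\<exists>c::real. \<forall>(n::nat) (\<tau>::nat) (T::nat \<Rightarrow> real) (P::nat \<Rightarrow> nat \<Rightarrow> real^2) (\<epsilon>::real).
            valid_input n \<tau> T P \<epsilon> \<longrightarrow>
              finite (reeb_vertices n \<tau> T P \<epsilon>) \<and> finite (reeb_edges n \<tau> T P \<epsilon>) \<and>
              real (card (reeb_vertices n \<tau> T P \<epsilon>)) \<le> c * real \<tau> * real n ^ 2 \<and>
              real (card (reeb_edges n \<tau> T P \<epsilon>)) \<le> c * real \<tau> * real n ^ 2)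
       \<and> (\<exists>c::real. c > 0 \<and> (\<exists>N::nat. \<forall>n \<ge> N. \<forall>\<tau> \<ge> 1.
            \<exists>(T::nat \<Rightarrow> real) (P::nat \<Rightarrow> nat \<Rightarrow> real^2) (\<epsilon>::real).
              valid_input n \<tau> T P \<epsilon> \<and>
              finite (reeb_vertices n \<tau> T P \<epsilon>) \<and> finite (reeb_edges n \<tau> T P \<epsilon>) \<and>
              real (card (reeb_vertices n \<tau> T P \<epsilon>)) \<ge> c * real \<tau> * real n ^ 2 \<and>
              real (card (reeb_edges n \<tau> T P \<epsilon>)) \<ge> c * real \<tau> * real n ^ 2))"
proof (rule conjI)
  show "\<exists>c::real. \<forall>(n::nat) (\<tau>::nat) (T::nat \<Rightarrow> real) (P::nat \<Rightarrow> nat \<Rightarrow> real^2) (\<epsilon>::real).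
            valid_input n \<tau> T P \<epsilon> \<longrightarrow>
              finite (reeb_vertices n \<tau> T P \<epsilon>) \<and> finite (reeb_edges n \<tau> T P \<epsilon>) \<and>
              real (card (reeb_vertices n \<tau> T P \<epsilon>)) \<le> c * real \<tau> * real n ^ 2 \<and>
              real (card (reeb_edges n \<tau> T P \<epsilon>)) \<le> c * real \<tau> * real n ^ 2"
  proof (intro exI[of _ 8] allI impI)
    fix n \<tau> T P \<epsilon> assume v: "valid_input n \<tau> T (P :: nat \<Rightarrow> nat \<Rightarrow> real^2) \<epsilon>"
    have V: "finite (reeb_vertices n \<tau> T P \<epsilon>)" "card (reeb_vertices n \<tau> T P \<epsilon>) \<le> 4 * n * n * \<tau>"
      using vertices_card[OF v] by auto
    have E: "finite (reeb_edges n \<tau> T P \<epsilon>)" "card (reeb_edges n \<tau> T P \<epsilon>) \<le> 2 * card (reeb_vertices n \<tau> T P \<epsilon>)"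
      using edges_card[OF v] by auto
    have rV: "real (card (reeb_vertices n \<tau> T P \<epsilon>)) \<le> real (4 * n * n * \<tau>)" using V(2) by linarith
    have rE: "real (card (reeb_edges n \<tau> T P \<epsilon>)) \<le> real (8 * n * n * \<tau>)" using E(2) V(2) by linarith
    have eq4: "real (4 * n * n * \<tau>) = 4 * real \<tau> * real n ^ 2" by (simp add: power2_eq_square)
    have eq8: "real (8 * n * n * \<tau>) = 8 * real \<tau> * real n ^ 2" by (simp add: power2_eq_square)
    have nn: "0 \<le> real \<tau> * real n ^ 2" by simp
    show "finite (reeb_vertices n \<tau> T P \<epsilon>) \<and> finite (reeb_edges n \<tau> T P \<epsilon>) \<and>
              real (card (reeb_vertices n \<tau> T P \<epsilon>)) \<le> 8 * real \<tau> * real n ^ 2 \<and>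
              real (card (reeb_edges n \<tau> T P \<epsilon>)) \<le> 8 * real \<tau> * real n ^ 2"
      using V(1) E(1) rV rE eq4 eq8 nn by linarith
  qed
next
  show "\<exists>c::real. c > 0 \<and> (\<exists>N::nat. \<forall>n \<ge> N. \<forall>\<tau> \<ge> 1.
            \<exists>(T::nat \<Rightarrow> real) (P::nat \<Rightarrow> nat \<Rightarrow> real^2) (\<epsilon>::real).
              valid_input n \<tau> T P \<epsilon> \<and>
              finite (reeb_vertices n \<tau> T P \<epsilon>) \<and> finite (reeb_edges n \<tau> T P \<epsilon>) \<and>
              real (card (reeb_vertices n \<tau> T P \<epsilon>)) \<ge> c * real \<tau> * real n ^ 2 \<and>
              real (card (reeb_edges n \<tau> T P \<epsilon>)) \<ge> c * real \<tau> * real n ^ 2)"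
  proof (intro exI[of _ "1/6"] conjI exI[of _ 2] allI impI)
    show "(0::real) < 1/6" by simp
    fix n \<tau> :: nat assume n: "2 \<le> n" and t: "1 \<le> \<tau>"
    interpret C: constr n \<tau> using n t by unfold_locales
    have L: "finite (reeb_vertices n \<tau> C.Tc C.Pc C.eps) \<and> finite (reeb_edges n \<tau> C.Tc C.Pc C.eps) \<and>
      \<tau> * ((n - C.m) * C.m) \<le> card (reeb_vertices n \<tau> C.Tc C.Pc C.eps) \<and>
      \<tau> * ((n - C.m) * C.m) \<le> card (reeb_edges n \<tau> C.Tc C.Pc C.eps)" by (rule C.lower)
    have S: "real \<tau> * real n ^ 2 \<le> 6 * real (\<tau> * ((n - C.m) * C.m))" by (rule C.six_bound)
    have r1: "real (\<tau> * ((n - C.m) * C.m)) \<le> real (card (reeb_vertices n \<tau> C.Tc C.Pc C.eps))" using L by linarith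
    have r2: "real (\<tau> * ((n - C.m) * C.m)) \<le> real (card (reeb_edges n \<tau> C.Tc C.Pc C.eps))" using L by linarith
    show "\<exists>(T::nat \<Rightarrow> real) (P::nat \<Rightarrow> nat \<Rightarrow> real^2) (\<epsilon>::real).
              valid_input n \<tau> T P \<epsilon> \<and>
              finite (reeb_vertices n \<tau> T P \<epsilon>) \<and> finite (reeb_edges n \<tau> T P \<epsilon>) \<and>
              real (card (reeb_vertices n \<tau> T P \<epsilon>)) \<ge> 1/6 * real \<tau> * real n ^ 2 \<and>
              real (card (reeb_edges n \<tau> T P \<epsilon>)) \<ge> 1/6 * real \<tau> * real n ^ 2"
      using C.valid L S r1 r2 by (intro exI[of _ C.Tc] exI[of _ C.Pc] exI[of _ C.eps]) auto
  qed
qed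


end
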